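(* Let $H$ be a complex Hilbert space, $A\in B(H)$ a nonzero positive semidefinite operator, and $T\in B_{A^{1/2}}(H)$ with $TA^{1/2}=A^{1/2}T$. If $\lambda\in\mathbb C$ satisfies $|\lambda|>\|T\|_A$, then $\lambda\in\rho_A(T)$.
   Context: $\|x\|_A=\langle Ax,x\rangle^{1/2}$. For $S\in B(H)$, $\|S\|_A=\sup\{\|Sx\|_A : x\in\overline{R(A)},\ \|x\|_A=1\}$. $B_{A^{1/2}}(H)=\{S\in B(H): R(S^*A^{1/2})\subset R(A^{1/2})\}$. $S\in B_{A^{1/2}}(H)$ is $A$-invertible in $B_{A^{1/2}}(H)$ if there is a nonzero $R\in B_{A^{1/2}}(H)$ with $ASR=ARS=A$; $\rho_A(S)=\{\lambda\in\mathbb C:\lambda I-S$ is $A$-invertible in $B_{A^{1/2}}(H)\}$. No closedness of $R(A)$ is assumed. *)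

theory Defs
  imports "HOL-Analysis.Analysis"
begin

class complex_vector = real_vector +
  fixes scaleC :: "complex \<Rightarrow> 'a \<Rightarrow> 'a"
  assumes scaleC_add_right: "scaleC c (x + y) = scaleC c x + scaleC c y"
    and scaleC_add_left: "scaleC (c + d) x = scaleC c x + scaleC d x"
    and scaleC_scaleC: "scaleC c (scaleC d x) = scaleC (c * d) x"
    and scaleC_one: "scaleC 1 x = x"
    and scaleR_scaleC: "scaleR r x = scaleC (complex_of_real r) x"

text \<open>Inner product, linear in the first and conjugate-linear in the second argument.\<close>
class complex_inner = complex_vector + real_normed_vector +
  fixes cinner :: "'a \<Rightarrow> 'a \<Rightarrow> complex"
  assumes cinner_commute: "cinner x y = cnj (cinner y x)"
    and cinner_add_left: "cinner (x + y) z = cinner x z + cinner y z"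
    and cinner_scaleC_left: "cinner (scaleC c x) y = c * cinner x y"
    and cinner_ge_zero: "0 \<le> Re (cinner x x)"
    and cinner_eq_zero_iff: "cinner x x = 0 \<longleftrightarrow> x = 0"
    and norm_eq_sqrt_cinner: "norm x = sqrt (Re (cinner x x))"

class chilbert_space = complex_inner + complete_space

definition clinear_op :: "('a::complex_vector \<Rightarrow> 'a) \<Rightarrow> bool" where
  "clinear_op S \<longleftrightarrow> (\<forall>x y. S (x + y) = S x + S y) \<and> (\<forall>c x. S (scaleC c x) = scaleC c (S x))"

definition bounded_op :: "('a::complex_inner \<Rightarrow> 'a) \<Rightarrow> bool" where
  "bounded_op S \<longleftrightarrow> clinear_op S \<and> (\<exists>K. \<forall>x. norm (S x) \<le> K * norm x)"

text \<open>Hilbert adjoint (unique for bounded operators, by the Riesz representation theorem).\<close>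
definition adjoint_op :: "('a::complex_inner \<Rightarrow> 'a) \<Rightarrow> ('a \<Rightarrow> 'a)" where
  "adjoint_op S = (THE S'. \<forall>x y. cinner (S x) y = cinner x (S' y))"

definition positive_op :: "('a::complex_inner \<Rightarrow> 'a) \<Rightarrow> bool" where
  "positive_op A \<longleftrightarrow> bounded_op A \<and>
     (\<forall>x. Im (cinner (A x) x) = 0 \<and> 0 \<le> Re (cinner (A x) x))"

definition op_sqrt :: "('a::complex_inner \<Rightarrow> 'a) \<Rightarrow> ('a \<Rightarrow> 'a)" where
  "op_sqrt A = (THE B. positive_op B \<and> B \<circ> B = A)"

definition normA :: "('a::complex_inner \<Rightarrow> 'a) \<Rightarrow> 'a \<Rightarrow> real" where
  "normA A x = sqrt (Re (cinner (A x) x))"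

definition opnormA :: "('a::complex_inner \<Rightarrow> 'a) \<Rightarrow> ('a \<Rightarrow> 'a) \<Rightarrow> real" where
  "opnormA A S = Sup {normA A (S x) | x. x \<in> closure (range A) \<and> normA A x = 1}"

definition B_sqrtA :: "('a::complex_inner \<Rightarrow> 'a) \<Rightarrow> ('a \<Rightarrow> 'a) set" where
  "B_sqrtA A = {S. bounded_op S \<and> range (adjoint_op S \<circ> op_sqrt A) \<subseteq> range (op_sqrt A)}"

definition A_invertible :: "('a::complex_inner \<Rightarrow> 'a) \<Rightarrow> ('a \<Rightarrow> 'a) \<Rightarrow> bool" where
  "A_invertible A S \<longleftrightarrow> S \<in> B_sqrtA A \<and>
     (\<exists>R\<in>B_sqrtA A. R \<noteq> (\<lambda>_. 0) \<and> A \<circ> S \<circ> R = A \<and> A \<circ> R \<circ> S = A)"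

definition resolventA :: "('a::complex_inner \<Rightarrow> 'a) \<Rightarrow> ('a \<Rightarrow> 'a) \<Rightarrow> complex set" where
  "resolventA A S = {l. A_invertible A (\<lambda>x. scaleC l x - S x)}"

end

theory Submission
  imports Defs
begin

instance chilbert_space \<subseteq> banach ..

lemma cinner_add_right: "cinner x (y + z) = cinner x y + cinner x z"
  by (metis cinner_add_left cinner_commute complex_cnj_add)

lemma cinner_scaleC_right: "cinner x (scaleC c y) = cnj c * cinner x y"
  by (metis cinner_commute cinner_scaleC_left complex_cnj_cnj complex_cnj_mult)

lemma cinner_zero_left[simp]: "cinner 0 x = 0"
  by (metis add.right_neutral add_left_cancel cinner_add_left)

lemma cinner_zero_right[simp]: "cinner x 0 = 0"
  by (metis cinner_commute cinner_zero_left complex_cnj_zero)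

lemma scaleC_zero_right[simp]: "scaleC c 0 = 0"
  by (metis add.right_neutral add_left_cancel scaleC_add_right)

lemma scaleC_zero_left[simp]: "scaleC 0 x = 0"
  by (metis of_real_0 scaleR_scaleC scaleR_zero_left)

lemma scaleC_minus_right: "scaleC c (- x) = - scaleC c x"
  by (metis add.right_inverse add_eq_0_iff scaleC_add_right scaleC_zero_right)

lemma scaleC_diff_right: "scaleC c (x - y) = scaleC c x - scaleC c y"
  by (metis diff_conv_add_uminus scaleC_add_right scaleC_minus_right)

lemma scaleC_minus_left: "scaleC (- c) x = - scaleC c x"
  by (metis add.right_inverse add_eq_0_iff scaleC_add_left scaleC_zero_left)

lemma scaleC_diff_left: "scaleC (c - d) x = scaleC c x - scaleC d x"
  by (metis diff_conv_add_uminus scaleC_add_left scaleC_minus_left)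

lemma cinner_minus_left: "cinner (- x) y = - cinner x y"
  by (metis add.right_inverse add_eq_0_iff cinner_add_left cinner_zero_left)

lemma cinner_diff_left: "cinner (x - y) z = cinner x z - cinner y z"
  by (metis cinner_add_left cinner_minus_left diff_conv_add_uminus)

lemma cinner_diff_right: "cinner x (y - z) = cinner x y - cinner x z"
  by (metis cinner_commute cinner_diff_left complex_cnj_diff)

lemma cinner_self_real: "cinner x x = complex_of_real (Re (cinner x x))"
proof -
  have "Im (cinner x x) = 0" by (metis cinner_commute cnj.sel(2) neg_equal_zero)
  then show ?thesis by (simp add: complex_eqI)
qed

lemma norm_sq_cinner: "(norm x)^2 = Re (cinner x x)"
  by (simp add: norm_eq_sqrt_cinner cinner_ge_zero)

lemma cinner_self_norm: "cinner x x = complex_of_real ((norm x)^2)"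
  using cinner_self_real norm_sq_cinner by metis

lemma norm_scaleC: "norm (scaleC c (x::'a::complex_inner)) = cmod c * norm x"
proof -
  have "cinner (scaleC c x) (scaleC c x) = (c * cnj c) * cinner x x"
    by (simp add: cinner_scaleC_left cinner_scaleC_right)
  also have "... = complex_of_real ((cmod c * norm x)^2)"
    by (simp add: complex_norm_square[symmetric] cinner_self_norm power_mult_distrib)
  finally have "(norm (scaleC c x))^2 = (cmod c * norm x)^2"
    by (metis norm_sq_cinner Re_complex_of_real)
  then show ?thesis by (simp add: power2_eq_iff_nonneg)
qed

lemma clin_add: "clinear_op S \<Longrightarrow> S (x + y) = S x + S y"
  by (simp add: clinear_op_def)
lemma clin_scaleC: "clinear_op S \<Longrightarrow> S (scaleC c x) = scaleC c (S x)"
  by (simp add: clinear_op_def)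
lemma clin_zero: "clinear_op S \<Longrightarrow> S 0 = 0"
  by (metis clin_scaleC scaleC_zero_left)
lemma clin_minus: "clinear_op S \<Longrightarrow> S (- x) = - S x"
  by (metis add.right_inverse add_eq_0_iff clin_add clin_zero)
lemma clin_diff: "clinear_op S \<Longrightarrow> S (x - y) = S x - S y"
  by (metis clin_add clin_minus diff_conv_add_uminus)
lemma clin_scaleR: "clinear_op S \<Longrightarrow> S (scaleR r x) = scaleR r (S x)"
  by (simp add: clin_scaleC scaleR_scaleC)

lemma clinear_opI: "(\<And>x y. S (x + y) = S x + S y) \<Longrightarrow> (\<And>c x. S (scaleC c x) = scaleC c (S x)) \<Longrightarrow> clinear_op S"
  by (simp add: clinear_op_def)

lemma bounded_opD: "bounded_op S \<Longrightarrow> \<exists>K>0. \<forall>x. norm (S x) \<le> K * norm x"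
proof -
  assume "bounded_op S"
  then obtain K where K: "\<forall>x. norm (S x) \<le> K * norm x" by (auto simp: bounded_op_def)
  have "\<forall>x. norm (S x) \<le> max K 1 * norm x"
    by (metis K max.cobounded1 mult_right_mono norm_ge_zero order_trans)
  then show ?thesis by (metis max.cobounded2 zero_less_one order_less_le_trans)
qed

lemma bounded_op_clin: "bounded_op S \<Longrightarrow> clinear_op S"
  by (simp add: bounded_op_def)

lemma bounded_op_bl: "bounded_op S \<Longrightarrow> bounded_linear S"
proof -
  assume b: "bounded_op S"
  then obtain K where K: "\<forall>x. norm (S x) \<le> K * norm x" by (auto simp: bounded_op_def)
  show ?thesis
    apply (rule bounded_linear_intro[where K=K])
    using b K by (auto simp: bounded_op_def clin_add clin_scaleR mult.commute)
qed

lemma bl_scaleC: "bounded_linear (scaleC c :: 'a::complex_inner \<Rightarrow> 'a)"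
  apply (rule bounded_linear_intro[where K="cmod c"])
    apply (simp add: scaleC_add_right)
   apply (simp add: scaleR_scaleC scaleC_scaleC mult.commute)
  by (simp add: norm_scaleC mult.commute)

lemma herm:
  assumes P: "clinear_op P" and im: "\<And>z. Im (cinner (P z) z) = 0"
  shows "cinner (P x) y = cnj (cinner (P y) x)"
proof -
  define a where "a = cinner (P x) y"
  define b where "b = cinner (P y) x"
  have e1: "cinner (P (x + y)) (x + y) = cinner (P x) x + a + b + cinner (P y) y"
    by (simp add: a_def b_def clin_add[OF P] cinner_add_left cinner_add_right)
  have e2: "cinner (P (x + scaleC \<i> y)) (x + scaleC \<i> y) = cinner (P x) x - \<i> * a + \<i> * b + cinner (P y) y"
    apply (simp add: a_def b_def clin_add[OF P] clin_scaleC[OF P] cinner_add_left cinner_add_right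
        cinner_scaleC_left cinner_scaleC_right)
    by (simp add: ring_distribs)
  have "Im a + Im b = 0" using im[of "x+y"] im[of x] im[of y] e1 by simp
  moreover have "Re b - Re a = 0" using im[of "x + scaleC \<i> y"] im[of x] im[of y] e2 by simp
  ultimately show ?thesis unfolding a_def[symmetric] b_def[symmetric]
    by (simp add: complex_eq_iff)
qed

lemma disc_lemma:
  fixes a c m :: real
  assumes h: "\<And>t. 0 \<le> a - 2*t*m + t^2*m*c" and m: "m \<ge> 0" and c: "c \<ge> 0"
  shows "m \<le> a*c"
proof (cases "c > 0")
  case True
  have "0 \<le> a - 2*(1/c)*m + (1/c)^2*m*c" by (rule h)
  also have "... = a - m/c" using True by (simp add: field_simps power2_eq_square)
  finally show ?thesis using True by (simp add: field_simps)
next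
  case False
  then have c0: "c = 0" using c by simp
  show ?thesis
  proof (rule ccontr)
    assume "\<not> m \<le> a * c"
    then have mp: "m > 0" using c0 by simp
    have "0 \<le> a - 2*((a+1)/(2*m))*m + ((a+1)/(2*m))^2*m*c" by (rule h)
    also have "... = -1" using mp c0 by (simp add: field_simps)
    finally show False by simp
  qed
qed

lemma gen_CS:
  assumes P: "clinear_op P" and im: "\<And>z. Im (cinner (P z) z) = 0"
    and pos: "\<And>z. 0 \<le> Re (cinner (P z) z)"
  shows "(cmod (cinner (P x) y))^2 \<le> Re (cinner (P x) x) * Re (cinner (P y) y)"
proof -
  define w where "w = cinner (P x) y"
  have w2: "cinner (P y) x = cnj w" unfolding w_def by (rule herm[OF P im])
  have "0 \<le> Re (cinner (P x) x) - 2*t*(cmod w)^2 + t^2*(cmod w)^2*Re (cinner (P y) y)" for t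
  proof -
    define s where "s = complex_of_real t * w"
    have "cinner (P (x - scaleC s y)) (x - scaleC s y)
        = cinner (P x) x - cnj s * w - s * cnj w + s * cnj s * cinner (P y) y"
      apply (simp add: clin_diff[OF P] clin_scaleC[OF P] cinner_diff_left cinner_diff_right
        cinner_scaleC_left cinner_scaleC_right w_def[symmetric] w2)
      by (simp add: algebra_simps)
    also have "... = cinner (P x) x - 2 * complex_of_real t * (w * cnj w) + (complex_of_real t)^2 * (w * cnj w) * cinner (P y) y"
      by (simp add: s_def algebra_simps power2_eq_square)
    also have "... = cinner (P x) x - complex_of_real (2*t*(cmod w)^2) + complex_of_real (t^2*(cmod w)^2) * cinner (P y) y"
      by (simp add: complex_norm_square[symmetric])
    finally have "Re (cinner (P (x - scaleC s y)) (x - scaleC s y)) = Re (cinner (P x) x) - 2*t*(cmod w)^2 + t^2*(cmod w)^2*Re (cinner (P y) y)"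
      by simp
    then show ?thesis using pos[of "x - scaleC s y"] by linarith
  qed
  then have "(cmod w)^2 \<le> Re (cinner (P x) x) * Re (cinner (P y) y)"
    by (intro disc_lemma) (use pos in auto)
  then show ?thesis by (simp add: w_def)
qed

lemma CS: "cmod (cinner x y) \<le> norm x * norm (y::'a::complex_inner)"
proof -
  have id: "clinear_op (\<lambda>z::'a. z)" by (simp add: clinear_op_def)
  have "(cmod (cinner x y))^2 \<le> Re (cinner x x) * Re (cinner y y)"
    using gen_CS[OF id, of x y] by (simp add: cinner_ge_zero cinner_self_norm)
  also have "... = (norm x * norm y)^2" by (simp add: norm_sq_cinner power_mult_distrib)
  finally show ?thesis by (rule power2_le_imp_le) simp
qed

lemma bl_cinner_left: "bounded_linear (\<lambda>x::'a::complex_inner. cinner x y)"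
  apply (rule bounded_linear_intro[where K="norm y"])
    apply (simp add: cinner_add_left)
   apply (simp only: scaleR_scaleC cinner_scaleC_left scaleR_conv_of_real)
  by (simp add: CS)

lemma bl_cinner_right: "bounded_linear (\<lambda>y::'a::complex_inner. cinner x y)"
  apply (rule bounded_linear_intro[where K="norm x"])
    apply (simp add: cinner_add_right)
   apply (metis scaleR_scaleC cinner_scaleC_right scaleR_conv_of_real complex_cnj_complex_of_real)
  by (metis CS mult.commute)

lemma cinner_eq_all_zero: "(\<And>z. cinner x z = 0) \<Longrightarrow> x = 0"
  using cinner_eq_zero_iff by metis

lemma ext_cinner: "(\<And>z. cinner z x = cinner z y) \<Longrightarrow> x = y"
proof -
  assume h: "\<And>z. cinner z x = cinner z y"
  have "cinner (x - y) (x - y) = 0" unfolding cinner_diff_right h[of "x-y"] by simp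
  then show ?thesis using cinner_eq_zero_iff[of "x-y"] by simp
qed

definition csubspace :: "'a::complex_vector set \<Rightarrow> bool" where
  "csubspace M \<longleftrightarrow> 0 \<in> M \<and> (\<forall>x\<in>M. \<forall>y\<in>M. x + y \<in> M) \<and> (\<forall>c. \<forall>x\<in>M. scaleC c x \<in> M)"

lemma csub_add: "csubspace M \<Longrightarrow> x \<in> M \<Longrightarrow> y \<in> M \<Longrightarrow> x + y \<in> M"
  by (simp add: csubspace_def)
lemma csub_scaleC: "csubspace M \<Longrightarrow> x \<in> M \<Longrightarrow> scaleC c x \<in> M"
  by (simp add: csubspace_def)
lemma csub_zero: "csubspace M \<Longrightarrow> 0 \<in> M"
  by (simp add: csubspace_def)
lemma csub_minus: "csubspace M \<Longrightarrow> x \<in> M \<Longrightarrow> - x \<in> M"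
  by (metis csub_scaleC scaleR_minus1_left scaleR_scaleC)
lemma csub_diff: "csubspace M \<Longrightarrow> x \<in> M \<Longrightarrow> y \<in> M \<Longrightarrow> x - y \<in> M"
  by (metis csub_add csub_minus diff_conv_add_uminus)

lemma norm_sq_diff_expand:
  fixes u m :: "'a::complex_inner"
  shows "(norm (u - scaleC (complex_of_real t * cinner u m) m))^2
     = (norm u)^2 - 2*t*(cmod (cinner u m))^2 + t^2*(cmod (cinner u m))^2*(norm m)^2"
proof -
  define w where "w = cinner u m"
  have w2: "cinner m u = cnj w" unfolding w_def by (rule cinner_commute)
  define s where "s = complex_of_real t * w"
  have "cinner (u - scaleC s m) (u - scaleC s m)
        = cinner u u - cnj s * w - s * cnj w + s * cnj s * cinner m m"
    apply (simp add: cinner_diff_left cinner_diff_right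
        cinner_scaleC_left cinner_scaleC_right w_def[symmetric] w2)
    by (simp add: algebra_simps)
  also have "... = cinner u u - 2 * complex_of_real t * (w * cnj w) + (complex_of_real t)^2 * (w * cnj w) * cinner m m"
    by (simp add: s_def algebra_simps power2_eq_square)
  also have "... = cinner u u - complex_of_real (2*t*(cmod w)^2) + complex_of_real (t^2*(cmod w)^2) * cinner m m"
    by (simp add: complex_norm_square[symmetric])
  finally have "Re (cinner (u - scaleC s m) (u - scaleC s m)) = Re (cinner u u) - 2*t*(cmod w)^2 + t^2*(cmod w)^2*Re (cinner m m)"
    by simp
  then show ?thesis by (simp add: norm_sq_cinner s_def w_def)
qed

lemma parallelogram:
  fixes a b :: "'a::complex_inner"
  shows "(norm (a - b))^2 + (norm (a + b))^2 = 2*(norm a)^2 + 2*(norm b)^2"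
  unfolding norm_sq_cinner
  by (simp add: cinner_diff_left cinner_diff_right cinner_add_left cinner_add_right)

lemma infdist_approx:
  assumes "A \<noteq> {}" "e > 0"
  shows "\<exists>a\<in>A. dist x a < infdist x A + e"
proof -
  have "(INF a\<in>A. dist x a) < infdist x A + e" using assms by (simp add: infdist_notempty)
  moreover have "bdd_below ((\<lambda>a. dist x a) ` A)" by (rule bdd_belowI[where m=0]) auto
  ultimately show ?thesis using cINF_less_iff[OF assms(1)] by blast
qed

lemma nearest_point:
  fixes M :: "'a::chilbert_space set"
  assumes cl: "closed M" and sub: "csubspace M"
  shows "\<exists>p\<in>M. \<forall>m\<in>M. norm (x - p) \<le> norm (x - m)"
proof -
  define d where "d = infdist x M"
  have ne: "M \<noteq> {}" using csub_zero[OF sub] by auto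
  have d0: "d \<ge> 0" by (simp add: d_def infdist_nonneg)
  have "\<forall>n. \<exists>a\<in>M. dist x a < d + 1/(Suc n)"
    using infdist_approx[OF ne] d_def by simp
  then obtain m where m: "\<And>n. m n \<in> M" and md: "\<And>n. norm (x - m n) < d + 1/(Suc n)"
    by (metis dist_norm)
  have dle: "d \<le> norm (x - a)" if "a \<in> M" for a
    using infdist_le[OF that, of x] by (simp add: d_def dist_norm)
  define e where "e n = (d + 1/(Suc n))^2 - d^2" for n
  have e_lim: "e \<longlonglongrightarrow> 0"
  proof -
    have "(\<lambda>n. 1/real (Suc n)) \<longlonglongrightarrow> 0" by (rule LIMSEQ_Suc[OF lim_inverse_n']) 
    then have "(\<lambda>n. (d + 1/real (Suc n))^2 - d^2) \<longlonglongrightarrow> (d + 0)^2 - d^2"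
      by (intro tendsto_intros)
    then show ?thesis unfolding e_def by simp
  qed
  have key: "(norm (m i - m j))^2 \<le> 2 * e i + 2 * e j" for i j
  proof -
    have mid: "scaleC (1/2) (m i + m j) \<in> M" using sub m by (simp add: csub_add csub_scaleC)
    have two: "scaleC 2 z = z + z" for z :: 'a by (metis scaleR_2 scaleR_scaleC of_real_numeral)
    have "x - m i + (x - m j) = scaleC 2 (x - scaleC (1/2) (m i + m j))"
      by (simp add: scaleC_diff_right scaleC_scaleC scaleC_one two)
    then have "norm (x - m i + (x - m j)) = 2 * norm (x - scaleC (1/2) (m i + m j))"
      by (simp add: norm_scaleC)
    then have h1: "norm (x - m i + (x - m j)) \<ge> 2 * d" using dle[OF mid] by simp
    have p: "(norm ((x - m i) - (x - m j)))^2 + (norm ((x - m i) + (x - m j)))^2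
        = 2*(norm (x - m i))^2 + 2*(norm (x - m j))^2" by (rule parallelogram)
    have "(norm (x - m i))^2 \<le> (d + 1/(Suc i))^2"
      using md[of i] by (intro power_mono) auto
    moreover have "(norm (x - m j))^2 \<le> (d + 1/(Suc j))^2"
      using md[of j] by (intro power_mono) auto
    moreover have "(2*d)^2 \<le> (norm (x - m i + (x - m j)))^2"
      using h1 d0 by (intro power_mono) auto
    moreover have "norm ((x - m i) - (x - m j)) = norm (m i - m j)"
      by (simp add: norm_minus_commute)
    ultimately show ?thesis using p unfolding e_def by (simp add: power_mult_distrib)
  qed
  have "Cauchy m"
  proof (rule CauchyI)
    fix eps :: real assume "eps > 0"
    then have "eps^2/4 > 0" by simp
    with e_lim obtain N where N: "\<And>n. n \<ge> N \<Longrightarrow> norm (e n - 0) < eps^2/4"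
      unfolding LIMSEQ_def dist_norm by blast
    have "norm (m i - m j) < eps" if "i \<ge> N" "j \<ge> N" for i j
    proof -
      have "e i < eps^2/4" "e j < eps^2/4" using N[OF that(1)] N[OF that(2)] by auto
      then have "(norm (m i - m j))^2 < eps^2" using key[of i j] by linarith
      then show ?thesis using \<open>eps > 0\<close> by (meson abs_le_square_iff abs_norm_cancel not_le order_less_le_trans power_less_imp_less_base less_imp_le)
    qed
    then show "\<exists>M. \<forall>i\<ge>M. \<forall>j\<ge>M. norm (m i - m j) < eps" by blast
  qed
  then obtain p where p: "m \<longlonglongrightarrow> p" using Cauchy_convergent_iff convergent_def by blast
  have pM: "p \<in> M" using closed_sequentially[OF cl m p] .
  have "norm (x - p) \<le> d"
  proof (rule tendsto_le[OF trivial_limit_sequentially])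
    show "(\<lambda>n. d + 1/real (Suc n)) \<longlonglongrightarrow> d"
      using tendsto_add[OF tendsto_const LIMSEQ_Suc[OF lim_inverse_n']] by simp
    show "(\<lambda>n. norm (x - m n)) \<longlonglongrightarrow> norm (x - p)" by (intro tendsto_intros p)
    show "\<forall>\<^sub>F n in sequentially. norm (x - m n) \<le> d + 1/real (Suc n)"
      by (rule always_eventually) (use md in \<open>auto intro: less_imp_le\<close>)
  qed
  then show ?thesis using pM dle by (meson order_trans)
qed

lemma proj_exists:
  fixes M :: "'a::chilbert_space set"
  assumes cl: "closed M" and sub: "csubspace M"
  shows "\<exists>p\<in>M. \<forall>m\<in>M. cinner (x - p) m = 0"
proof -
  obtain p where pM: "p \<in> M" and pmin: "\<And>m. m \<in> M \<Longrightarrow> norm (x - p) \<le> norm (x - m)"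
    using nearest_point[OF cl sub] by blast
  have "cinner (x - p) m = 0" if mM: "m \<in> M" for m
  proof (rule ccontr)
    define u where "u = x - p"
    define w where "w = cinner u m"
    assume "cinner (x - p) m \<noteq> 0"
    then have wpos: "(cmod w)^2 > 0" by (simp add: u_def w_def)
    define t where "t = 1 / ((norm m)^2 + 1)"
    have pos: "(norm m)^2 + 1 > 0" by (metis add_pos_nonneg zero_less_one zero_le_power2 add.commute)
    then have t0: "t > 0" by (simp add: t_def)
    have tm: "t * (norm m)^2 < 1" using pos by (simp add: t_def field_simps)
    have inM: "p + scaleC (complex_of_real t * w) m \<in> M"
      using sub pM mM by (simp add: csub_add csub_scaleC)
    have "(norm u)^2 \<le> (norm (u - scaleC (complex_of_real t * w) m))^2"
      using pmin[OF inM] by (simp add: u_def diff_diff_eq)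
    also have "... = (norm u)^2 - 2*t*(cmod w)^2 + t^2*(cmod w)^2*(norm m)^2"
      unfolding w_def by (rule norm_sq_diff_expand)
    finally have "0 \<le> t * (cmod w)^2 * (t * (norm m)^2 - 2)"
      by (simp add: algebra_simps power2_eq_square)
    moreover have "t * (cmod w)^2 * (t * (norm m)^2 - 2) < 0"
      using t0 wpos tm by (intro mult_pos_neg) auto
    ultimately show False by simp
  qed
  then show ?thesis using pM by blast
qed

definition proj :: "'a::chilbert_space set \<Rightarrow> 'a \<Rightarrow> 'a" where
  "proj M x = (SOME p. p \<in> M \<and> (\<forall>m\<in>M. cinner (x - p) m = 0))"

lemma proj_prop:
  assumes "closed M" "csubspace M"
  shows "proj M x \<in> M \<and> (\<forall>m\<in>M. cinner (x - proj M x) m = 0)"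
  unfolding proj_def by (rule someI_ex) (use proj_exists[OF assms] in blast)

lemma proj_unique:
  assumes cl: "closed M" and sub: "csubspace M" and pM: "p \<in> M"
    and orth: "\<And>m. m \<in> M \<Longrightarrow> cinner (x - p) m = 0"
  shows "proj M x = p"
proof -
  have q: "proj M x \<in> M" "\<And>m. m \<in> M \<Longrightarrow> cinner (x - proj M x) m = 0"
    using proj_prop[OF cl sub] by auto
  have dM: "p - proj M x \<in> M" using csub_diff[OF sub pM q(1)] .
  have e: "(x - proj M x) - (x - p) = p - proj M x" by simp
  have "cinner (p - proj M x) (p - proj M x) = cinner ((x - proj M x) - (x - p)) (p - proj M x)"
    unfolding e ..
  also have "... = 0" using cinner_diff_left[of "x - proj M x" "x - p" "p - proj M x"] q(2)[OF dM] orth[OF dM] by simp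
  finally show ?thesis using cinner_eq_zero_iff[of "p - proj M x"] by simp
qed

lemma proj_clinear:
  assumes cl: "closed M" and sub: "csubspace M"
  shows "clinear_op (proj M)"
proof (rule clinear_opI)
  have P: "\<And>x. proj M x \<in> M" "\<And>x m. m \<in> M \<Longrightarrow> cinner (x - proj M x) m = 0"
    using proj_prop[OF cl sub] by auto
  fix x y
  show "proj M (x + y) = proj M x + proj M y"
  proof (rule proj_unique[OF cl sub])
    show "proj M x + proj M y \<in> M" using P sub by (simp add: csub_add)
    fix m assume "m \<in> M"
    have e: "x + y - (proj M x + proj M y) = (x - proj M x) + (y - proj M y)" by simp
    show "cinner (x + y - (proj M x + proj M y)) m = 0"
      unfolding e cinner_add_left P(2)[OF \<open>m\<in>M\<close>] by simp
  qed
next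
  have P: "\<And>x. proj M x \<in> M" "\<And>x m. m \<in> M \<Longrightarrow> cinner (x - proj M x) m = 0"
    using proj_prop[OF cl sub] by auto
  fix c x
  show "proj M (scaleC c x) = scaleC c (proj M x)"
  proof (rule proj_unique[OF cl sub])
    show "scaleC c (proj M x) \<in> M" using P sub by (simp add: csub_scaleC)
    fix m assume "m \<in> M"
    show "cinner (scaleC c x - scaleC c (proj M x)) m = 0"
      by (simp add: scaleC_diff_right[symmetric] cinner_scaleC_left P(2)[OF \<open>m\<in>M\<close>])
  qed
qed

lemma proj_norm:
  assumes cl: "closed M" and sub: "csubspace M"
  shows "norm (proj M x) \<le> norm x"
proof -
  have P: "proj M x \<in> M" "\<And>m. m \<in> M \<Longrightarrow> cinner (x - proj M x) m = 0"
    using proj_prop[OF cl sub] by auto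
  have o1: "cinner (x - proj M x) (proj M x) = 0" using P by simp
  have o2: "cinner (proj M x) (x - proj M x) = 0" using o1 cinner_commute by (metis complex_cnj_zero)
  have "cinner x x = cinner (proj M x + (x - proj M x)) (proj M x + (x - proj M x))" by simp
  also have "... = cinner (proj M x) (proj M x) + cinner (x - proj M x) (x - proj M x)"
    unfolding cinner_add_left cinner_add_right o1 o2 by simp
  finally have "(norm x)^2 = (norm (proj M x))^2 + (norm (x - proj M x))^2"
    by (simp add: norm_sq_cinner)
  then have "(norm (proj M x))^2 \<le> (norm x)^2" by simp
  then show ?thesis by (rule power2_le_imp_le) simp
qed

lemma proj_bounded:
  assumes cl: "closed M" and sub: "csubspace M"
  shows "bounded_op (proj M)"
  unfolding bounded_op_def using proj_clinear[OF assms] proj_norm[OF assms]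
  by (metis mult_1)

lemma proj_id: "closed M \<Longrightarrow> csubspace M \<Longrightarrow> x \<in> M \<Longrightarrow> proj M x = x"
  by (rule proj_unique) auto

lemma riesz:
  fixes f :: "'a::chilbert_space \<Rightarrow> complex"
  assumes add: "\<And>x y. f (x + y) = f x + f y" and sc: "\<And>c x. f (scaleC c x) = c * f x"
    and bd: "\<And>x. cmod (f x) \<le> K * norm x"
  shows "\<exists>z. \<forall>x. f x = cinner x z"
proof -
  have bl: "bounded_linear f"
    apply (rule bounded_linear_intro[where K=K])
      apply (rule add)
     apply (metis sc scaleR_scaleC scaleR_conv_of_real)
    by (metis bd mult.commute)
  define N where "N = {x. f x = 0}"
  have f0: "f 0 = 0" using sc[of 0 0] by simp
  have clN: "closed N" unfolding N_def
    by (rule closed_Collect_eq) (auto intro: linear_continuous_on bl continuous_on_const)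
  have subN: "csubspace N" unfolding N_def csubspace_def using f0 add sc by auto
  show ?thesis
  proof (cases "\<forall>x. f x = 0")
    case True then show ?thesis by (intro exI[of _ 0]) simp
  next
    case False
    then obtain x0 where x0: "f x0 \<noteq> 0" by blast
    define u where "u = x0 - proj N x0"
    have pr: "proj N x0 \<in> N" "\<And>m. m \<in> N \<Longrightarrow> cinner u m = 0"
      using proj_prop[OF clN subN] u_def by auto
    have fu: "f u = f x0" using pr(1) add[of "x0 - proj N x0" "proj N x0"] by (simp add: N_def u_def)
    then have fu0: "f u \<noteq> 0" using x0 by simp
    have u0: "cinner u u \<noteq> 0" using fu0 f0 cinner_eq_zero_iff[of u] by auto
    define z where "z = scaleC (cnj (f u) / cinner u u) u"
    have "f x = cinner x z" for x
    proof -
      define v where "v = scaleC (f x) u - scaleC (f u) x"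
      have fv: "f v = 0"
      proof -
        have "f v + f (scaleC (f u) x) = f (scaleC (f x) u)" using add[of v "scaleC (f u) x"] by (simp add: v_def)
        then show ?thesis by (simp add: sc mult.commute)
      qed
      then have "cinner u v = 0" using pr(2) by (simp add: N_def)
      then have "cnj (f x) * cinner u u = cnj (f u) * cinner u x"
        by (simp add: v_def cinner_diff_right cinner_scaleC_right)
      then have "f x * cnj (cinner u u) = f u * cinner x u"
        by (metis cinner_commute complex_cnj_cnj complex_cnj_mult)
      then have "f x = f u * cinner x u / cnj (cinner u u)" using u0
        by (simp add: field_simps)
      also have "... = cinner x z"
        by (simp add: z_def cinner_scaleC_right)
      finally show ?thesis .
    qed
    then show ?thesis by blast
  qed
qed

lemma adjoint_exists:
  fixes S :: "'a::chilbert_space \<Rightarrow> 'a"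
  assumes b: "bounded_op S"
  shows "\<exists>S'. \<forall>x y. cinner (S x) y = cinner x (S' y)"
proof -
  obtain K where K: "\<forall>x. norm (S x) \<le> K * norm x" using b by (auto simp: bounded_op_def)
  have S: "clinear_op S" using b by (simp add: bounded_op_def)
  have "\<forall>y. \<exists>z. \<forall>x. cinner (S x) y = cinner x z"
  proof
    fix y
    show "\<exists>z. \<forall>x. cinner (S x) y = cinner x z"
    proof (rule riesz[where f="\<lambda>x. cinner (S x) y" and K="K * norm y", simplified])
      fix x x'
      show "cinner (S (x + x')) y = cinner (S x) y + cinner (S x') y" by (simp add: clin_add[OF S] cinner_add_left)
    next
      fix c x
      show "cinner (S (scaleC c x)) y = c * cinner (S x) y" by (simp add: clin_scaleC[OF S] cinner_scaleC_left)
    next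
      fix x
      have "cmod (cinner (S x) y) \<le> norm (S x) * norm y" by (rule CS)
      also have "... \<le> K * norm x * norm y" using K by (simp add: mult_right_mono)
      finally show "cmod (cinner (S x) y) \<le> K * norm y * norm x" by (simp add: ac_simps)
    qed
  qed
  then show ?thesis by metis
qed

lemma adjoint_unique_aux:
  assumes "\<forall>x y. cinner (S x) y = cinner x (S1 y)" "\<forall>x y. cinner (S x) y = cinner x (S2 y)"
  shows "S1 = S2"
proof
  fix y show "S1 y = S2 y" by (rule ext_cinner) (use assms in metis)
qed

lemma adjoint_prop:
  fixes S :: "'a::chilbert_space \<Rightarrow> 'a"
  assumes b: "bounded_op S"
  shows "cinner (S x) y = cinner x (adjoint_op S y)"
proof -
  obtain S' where S': "\<forall>x y. cinner (S x) y = cinner x (S' y)" using adjoint_exists[OF b] by blast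
  have "\<forall>x y. cinner (S x) y = cinner x (adjoint_op S y)"
    unfolding adjoint_op_def
    by (rule theI[of _ S']) (use S' adjoint_unique_aux in blast)+
  then show ?thesis by blast
qed

lemma adjoint_eq:
  fixes S :: "'a::chilbert_space \<Rightarrow> 'a"
  assumes b: "bounded_op S" and h: "\<And>x y. cinner (S x) y = cinner x (S' y)"
  shows "adjoint_op S = S'"
  using adjoint_unique_aux[of S "adjoint_op S" S'] adjoint_prop[OF b] h by blast

section \<open>Positive operators\<close>

lemma pos_clin: "positive_op P \<Longrightarrow> clinear_op P"
  by (simp add: positive_op_def bounded_op_def)
lemma pos_bounded: "positive_op P \<Longrightarrow> bounded_op P"
  by (simp add: positive_op_def)
lemma pos_im: "positive_op P \<Longrightarrow> Im (cinner (P z) z) = 0"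
  by (simp add: positive_op_def)
lemma pos_re: "positive_op P \<Longrightarrow> 0 \<le> Re (cinner (P z) z)"
  by (simp add: positive_op_def)

lemma pos_selfadj:
  assumes "positive_op P"
  shows "cinner (P x) y = cinner x (P y)"
proof -
  have "cinner (P x) y = cnj (cinner (P y) x)"
    by (rule herm[OF pos_clin[OF assms]]) (rule pos_im[OF assms])
  then show ?thesis by (metis cinner_commute)
qed

lemma pos_zero:
  assumes P: "positive_op P" and z: "Re (cinner (P y) y) = 0"
  shows "P y = 0"
proof -
  have "(cmod (cinner (P y) (P y)))^2 \<le> Re (cinner (P y) y) * Re (cinner (P (P y)) (P y))"
    by (rule gen_CS[OF pos_clin[OF P]]) (use P in \<open>auto intro: pos_im pos_re\<close>)
  then have "cinner (P y) (P y) = 0" using z by simp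
  then show ?thesis using cinner_eq_zero_iff by metis
qed

section \<open>Coefficients of the square root series\<close>

fun sc :: "nat \<Rightarrow> real" where
  "sc n = (if n = 0 then 0 else if n = 1 then 1/2 else (\<Sum>k\<in>{1..<n}. sc k * sc (n - k)) / 2)"

declare sc.simps[simp del]

lemma sc_0[simp]: "sc 0 = 0" by (simp add: sc.simps)
lemma sc_1[simp]: "sc 1 = 1/2" by (simp add: sc.simps)
lemma sc_Suc0[simp]: "sc (Suc 0) = 1/2" by (simp add: sc.simps)

lemma sc_nonneg: "sc n \<ge> 0"
proof (induction n rule: less_induct)
  case (less n)
  show ?case
  proof (cases "n \<le> 1")
    case True then show ?thesis by (cases n) (auto simp: sc.simps)
  next
    case False
    then have "sc n = (\<Sum>k\<in>{1..<n}. sc k * sc (n - k)) / 2" by (simp add: sc.simps)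
    moreover have "(\<Sum>k\<in>{1..<n}. sc k * sc (n - k)) \<ge> 0"
      by (intro sum_nonneg mult_nonneg_nonneg less.IH) auto
    ultimately show ?thesis by simp
  qed
qed

definition conv :: "nat \<Rightarrow> real" where
  "conv n = (\<Sum>k\<le>n. sc k * sc (n - k))"

lemma conv_eq: "n \<ge> 2 \<Longrightarrow> conv n = (\<Sum>k\<in>{1..<n}. sc k * sc (n - k))"
  unfolding conv_def
  by (rule sum.mono_neutral_right) (auto simp: not_less_eq_eq le_Suc_eq)

lemma sc_rec: "2 * sc n = (if n = 1 then 1 else 0) + conv n"
proof (cases "n \<ge> 2")
  case True
  then show ?thesis using conv_eq[OF True] by (simp add: sc.simps[of n])
next
  case False
  then have "n = 0 \<or> n = 1" by auto
  then show ?thesis by (auto simp: conv_def)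
qed

definition ps :: "nat \<Rightarrow> real" where "ps N = (\<Sum>n\<le>N. sc n)"
definition tri :: "nat \<Rightarrow> real" where "tri N = (\<Sum>(i,j)\<in>{(i,j). i + j \<le> N}. sc i * sc j)"

lemma tri_conv: "tri N = (\<Sum>n\<le>N. conv n)"
  unfolding tri_def conv_def by (rule sum.triangle_reindex_eq)

lemma ps_tri: "N \<ge> 1 \<Longrightarrow> 2 * ps N = 1 + tri N"
proof -
  assume N: "N \<ge> 1"
  have "2 * ps N = (\<Sum>n\<le>N. (if n = 1 then 1 else 0) + conv n)"
    unfolding ps_def sum_distrib_left sc_rec ..
  also have "... = (\<Sum>n\<le>N. (if n = 1 then 1 else 0)) + tri N"
    by (simp add: sum.distrib tri_conv)
  also have "(\<Sum>n\<le>N. (if n = 1 then 1 else 0)) = (1::real)"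
    using N by (simp add: sum.delta)
  finally show ?thesis .
qed

lemma finite_tri: "finite {(i,j). i + j \<le> (N::nat)}"
  by (rule finite_subset[of _ "{..N} \<times> {..N}"]) auto

lemma box_sq: "(\<Sum>(i,j)\<in>{..N} \<times> {..N}. sc i * sc j) = (ps N)^2"
  unfolding ps_def power2_eq_square sum_product sum.cartesian_product ..

lemma tri_le_box: "tri (Suc N) \<le> (ps N)^2"
proof -
  let ?T = "{(i,j). i + j \<le> Suc N}"
  let ?T' = "{(i,j). i + j \<le> Suc N \<and> i \<ge> 1 \<and> j \<ge> 1}"
  have "tri (Suc N) = (\<Sum>(i,j)\<in>?T'. sc i * sc j)"
    unfolding tri_def
    apply (rule sum.mono_neutral_right) apply (auto intro: finite_tri)
    by (metis sc_0 Suc_leI gr0I)+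
  also have "... \<le> (\<Sum>(i,j)\<in>{..N} \<times> {..N}. sc i * sc j)"
    by (rule sum_mono2) (auto intro: mult_nonneg_nonneg sc_nonneg)
  finally show ?thesis using box_sq by simp
qed

lemma box_le_tri: "(ps M)^2 \<le> tri (2*M + 1)"
proof -
  have "(\<Sum>(i,j)\<in>{..M} \<times> {..M}. sc i * sc j) \<le> tri (2*M+1)"
    unfolding tri_def
    by (rule sum_mono2) (auto intro: finite_tri mult_nonneg_nonneg sc_nonneg)
  then show ?thesis using box_sq by simp
qed

lemma ps_nonneg: "ps N \<ge> 0"
  unfolding ps_def by (intro sum_nonneg sc_nonneg)

lemma ps_le1: "ps N \<le> 1"
proof (induction N)
  case 0 then show ?case by (simp add: ps_def)
next
  case (Suc N)
  have "2 * ps (Suc N) = 1 + tri (Suc N)" by (rule ps_tri) simp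
  also have "... \<le> 1 + (ps N)^2" using tri_le_box by simp
  also have "... \<le> 2" using Suc ps_nonneg[of N] by (simp add: power_le_one)
  finally show ?case by simp
qed

lemma sc_summable: "summable sc"
proof (rule summableI_nonneg_bounded[where x=1])
  fix n
  show "(\<Sum>i<n. sc i) \<le> 1"
  proof (cases n)
    case 0 then show ?thesis by simp
  next
    case (Suc m)
    then show ?thesis using ps_le1[of m] by (simp add: ps_def lessThan_Suc_atMost)
  qed
qed (rule sc_nonneg)

lemma ps_lim: "ps \<longlonglongrightarrow> suminf sc"
proof -
  have "(\<lambda>n. \<Sum>i<Suc n. sc i) \<longlonglongrightarrow> suminf sc"
    by (rule LIMSEQ_Suc[OF summable_LIMSEQ[OF sc_summable]])
  then show ?thesis by (simp add: ps_def[abs_def] lessThan_Suc_atMost)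
qed

lemma ps_le_suminf: "ps N \<le> suminf sc"
  unfolding ps_def lessThan_Suc_atMost[symmetric]
  by (rule sum_le_suminf[OF sc_summable]) (auto intro: sc_nonneg)

lemma suminf_sc: "suminf sc = 1"
proof -
  let ?s = "suminf sc"
  have "1 + (ps M)^2 \<le> 2 * ?s" for M
  proof -
    have "1 + (ps M)^2 \<le> 1 + tri (2*M+1)" using box_le_tri by simp
    also have "... = 2 * ps (2*M+1)" by (rule ps_tri[symmetric]) simp
    also have "... \<le> 2 * ?s" using ps_le_suminf by simp
    finally show ?thesis .
  qed
  moreover have "(\<lambda>M. 1 + (ps M)^2) \<longlonglongrightarrow> 1 + ?s^2"
    by (intro tendsto_intros ps_lim)
  ultimately have "1 + ?s^2 \<le> 2 * ?s"
    by (intro tendsto_le[OF trivial_limit_sequentially tendsto_const]) auto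
  then have "(?s - 1)^2 \<le> 0" by (simp add: power2_diff)
  then show ?thesis by simp
qed

lemma ps_lim1: "(\<lambda>N. 1 - ps N) \<longlonglongrightarrow> 0"
  using tendsto_diff[OF tendsto_const ps_lim, of 1] suminf_sc by simp

lemma clin_sum: "clinear_op S \<Longrightarrow> S (sum g A) = (\<Sum>a\<in>A. S (g a))"
  using sum_comp_morphism[of S g A] by (simp add: clin_zero clin_add comp_def)

lemma scaleC_sum_right: "scaleC c (sum g A) = (\<Sum>a\<in>A. scaleC c (g a))"
  using sum_comp_morphism[of "scaleC c" g A] by (simp add: scaleC_add_right comp_def)

lemma scaleR_scaleC_comm: "scaleR r (scaleC c x) = scaleC c (scaleR r x)"
  by (simp add: scaleR_scaleC scaleC_scaleC mult.commute)

locale sqctx =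
  fixes C :: "'a::chilbert_space \<Rightarrow> 'a"
  assumes Clin: "clinear_op C" and Cnorm: "\<And>x. norm (C x) \<le> norm x"
    and Csa: "\<And>x y. cinner (C x) y = cinner x (C y)"
begin

lemma pw_clin: "clinear_op (C ^^ n)"
  by (induction n) (auto simp: clinear_op_def clin_add[OF Clin] clin_scaleC[OF Clin])

lemma pw_norm: "norm ((C ^^ n) x) \<le> norm x"
  by (induction n) (auto intro: order_trans[OF Cnorm])

lemma pw_sa: "cinner ((C ^^ n) x) y = cinner x ((C ^^ n) y)"
proof (induction n arbitrary: y)
  case 0 then show ?case by simp
next
  case (Suc n)
  have "cinner ((C ^^ Suc n) x) y = cinner ((C ^^ n) x) (C y)" by (simp add: Csa)
  also have "... = cinner x ((C ^^ n) (C y))" by (rule Suc.IH)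
  also have "(C ^^ n) (C y) = (C ^^ Suc n) y" by (simp add: funpow_Suc_right del: funpow.simps)
  finally show ?case .
qed

lemma pw_add: "(C ^^ i) ((C ^^ j) x) = (C ^^ (i + j)) x"
  by (simp add: funpow_add)

lemma pw_im: "Im (cinner ((C ^^ n) x) x) = 0"
proof -
  have "cinner ((C ^^ n) x) x = cnj (cinner ((C ^^ n) x) x)"
    by (metis pw_sa cinner_commute)
  then show ?thesis by (metis cnj.sel(2) neg_equal_zero)
qed

lemma pw_re: "Re (cinner ((C ^^ n) x) x) \<le> (norm x)^2"
proof -
  have "Re (cinner ((C ^^ n) x) x) \<le> cmod (cinner ((C ^^ n) x) x)" by (rule complex_Re_le_cmod)
  also have "... \<le> norm ((C ^^ n) x) * norm x" by (rule CS)
  also have "... \<le> norm x * norm x" by (intro mult_right_mono pw_norm) simp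
  finally show ?thesis by (simp add: power2_eq_square)
qed

definition trm :: "'a \<Rightarrow> nat \<Rightarrow> 'a" where "trm x n = scaleR (sc n) ((C ^^ n) x)"

lemma trm_norm: "norm (trm x n) \<le> sc n * norm x"
  unfolding trm_def using sc_nonneg[of n] pw_norm[of n x]
  by (simp add: mult_left_mono)

lemma trm_summable: "summable (trm x)"
  by (rule summable_comparison_test'[where g="\<lambda>n. sc n * norm x" and N=0])
     (auto intro: summable_mult2 sc_summable trm_norm)

lemma trm_norm_summable: "summable (\<lambda>n. norm (trm x n))"
  by (rule summable_comparison_test'[where g="\<lambda>n. sc n * norm x" and N=0])
     (auto intro: summable_mult2 sc_summable trm_norm)

lemma trm_add: "trm (x + y) n = trm x n + trm y n"
  by (simp add: trm_def clin_add[OF pw_clin] scaleR_add_right)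

lemma trm_scaleC: "trm (scaleC c x) n = scaleC c (trm x n)"
  by (simp add: trm_def clin_scaleC[OF pw_clin] scaleR_scaleC_comm)

definition Sp :: "nat \<Rightarrow> 'a \<Rightarrow> 'a" where "Sp N x = (\<Sum>n\<le>N. trm x n)"
definition Si :: "'a \<Rightarrow> 'a" where "Si x = suminf (trm x)"
definition Bq :: "'a \<Rightarrow> 'a" where "Bq x = x - Si x"

lemma Sp_clin: "clinear_op (Sp N)"
  by (rule clinear_opI) (simp_all add: Sp_def trm_add trm_scaleC sum.distrib scaleC_sum_right)

lemma Sp_norm: "norm (Sp N x) \<le> ps N * norm x"
proof -
  have "norm (Sp N x) \<le> (\<Sum>n\<le>N. norm (trm x n))" unfolding Sp_def by (rule norm_sum)
  also have "... \<le> (\<Sum>n\<le>N. sc n * norm x)" by (intro sum_mono trm_norm)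
  also have "... = ps N * norm x" by (simp add: ps_def sum_distrib_right)
  finally show ?thesis .
qed

lemma Sp_norm1: "norm (Sp N x) \<le> norm x"
proof -
  have "ps N * norm x \<le> 1 * norm x" by (intro mult_right_mono ps_le1) simp
  then show ?thesis using Sp_norm[of N x] by linarith
qed

lemma Si_clin: "clinear_op Si"
proof (rule clinear_opI)
  fix x y
  show "Si (x + y) = Si x + Si y"
    unfolding Si_def trm_add[abs_def] by (rule suminf_add[OF trm_summable trm_summable, symmetric])
next
  fix c x
  show "Si (scaleC c x) = scaleC c (Si x)"
    unfolding Si_def trm_scaleC
    by (rule bounded_linear.suminf[OF bl_scaleC trm_summable, symmetric])
qed

lemma tail: "norm (Si x - Sp N x) \<le> (1 - ps N) * norm x"
proof -
  have "Si x = (\<Sum>k. trm x (k + Suc N)) + (\<Sum>i<Suc N. trm x i)"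
    unfolding Si_def by (rule suminf_split_initial_segment[OF trm_summable])
  then have e: "Si x - Sp N x = (\<Sum>k. trm x (k + Suc N))"
    by (simp add: Sp_def lessThan_Suc_atMost)
  have s1: "summable (\<lambda>k. norm (trm x (k + Suc N)))"
    using summable_ignore_initial_segment[OF trm_norm_summable] .
  have s2: "summable (\<lambda>k. sc (k + Suc N) * norm x)"
    using summable_ignore_initial_segment[OF summable_mult2[OF sc_summable]] .
  have "norm (Si x - Sp N x) \<le> (\<Sum>k. norm (trm x (k + Suc N)))"
    unfolding e by (rule summable_norm[OF s1])
  also have "... \<le> (\<Sum>k. sc (k + Suc N) * norm x)"
    by (rule suminf_le[OF _ s1 s2]) (rule trm_norm)
  also have "... = (\<Sum>k. sc (k + Suc N)) * norm x"
    by (rule suminf_mult2[symmetric]) (rule summable_ignore_initial_segment[OF sc_summable])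
  also have "(\<Sum>k. sc (k + Suc N)) = 1 - ps N"
    using suminf_minus_initial_segment[OF sc_summable, of "Suc N"]
    by (simp add: suminf_sc ps_def lessThan_Suc_atMost)
  finally show ?thesis .
qed

lemma Si_norm: "norm (Si x) \<le> norm x"
proof -
  have "norm (Si x) \<le> (\<Sum>n. norm (trm x n))" unfolding Si_def by (rule summable_norm[OF trm_norm_summable])
  also have "... \<le> (\<Sum>n. sc n * norm x)"
    by (rule suminf_le[OF _ trm_norm_summable summable_mult2[OF sc_summable]]) (rule trm_norm)
  also have "... = norm x" using suminf_mult2[OF sc_summable, of "norm x"] suminf_sc by simp
  finally show ?thesis .
qed

end

context sqctx begin

definition gg :: "'a \<Rightarrow> nat \<Rightarrow> nat \<Rightarrow> 'a" where
  "gg x i j = scaleR (sc i * sc j) ((C ^^ (i + j)) x)"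

lemma SpSp: "Sp N (Sp N x) = (\<Sum>(i,j)\<in>{..N} \<times> {..N}. gg x i j)"
proof -
  have "Sp N (Sp N x) = (\<Sum>i\<le>N. scaleR (sc i) ((C ^^ i) (\<Sum>j\<le>N. trm x j)))"
    by (simp add: Sp_def trm_def)
  also have "... = (\<Sum>i\<le>N. \<Sum>j\<le>N. gg x i j)"
  proof (rule sum.cong[OF refl])
    fix i
    have "(C ^^ i) (\<Sum>j\<le>N. trm x j) = (\<Sum>j\<le>N. (C ^^ i) (trm x j))" by (rule clin_sum[OF pw_clin])
    then show "scaleR (sc i) ((C ^^ i) (\<Sum>j\<le>N. trm x j)) = (\<Sum>j\<le>N. gg x i j)"
      by (simp add: scaleR_sum_right trm_def gg_def clin_scaleR[OF pw_clin] pw_add)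
  qed
  also have "... = (\<Sum>(i,j)\<in>{..N} \<times> {..N}. gg x i j)" by (rule sum.cartesian_product)
  finally show ?thesis .
qed

lemma two_Sp:
  assumes N: "N \<ge> 1"
  shows "scaleR 2 (Sp N x) = C x + (\<Sum>(i,j)\<in>{(i,j). i + j \<le> N}. gg x i j)"
proof -
  have "scaleR 2 (Sp N x) = (\<Sum>n\<le>N. scaleR (2 * sc n) ((C ^^ n) x))"
    by (simp add: Sp_def trm_def scaleR_sum_right)
  also have "... = (\<Sum>n\<le>N. scaleR (if n = 1 then 1 else 0) ((C ^^ n) x)) + (\<Sum>n\<le>N. scaleR (conv n) ((C ^^ n) x))"
    unfolding sc_rec scaleR_add_left sum.distrib ..
  also have "(\<Sum>n\<le>N. scaleR (if n = 1 then 1 else 0) ((C ^^ n) x)) = (\<Sum>n\<le>N. if n = 1 then (C ^^ n) x else 0)"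
    by (rule sum.cong) auto
  also have "... = C x" using N by (simp add: sum.delta)
  also have "(\<Sum>n\<le>N. scaleR (conv n) ((C ^^ n) x)) = (\<Sum>n\<le>N. \<Sum>k\<le>n. gg x k (n - k))"
  proof (rule sum.cong[OF refl])
    fix n
    show "scaleR (conv n) ((C ^^ n) x) = (\<Sum>k\<le>n. gg x k (n - k))"
      unfolding conv_def scaleR_sum_left gg_def by (rule sum.cong) auto
  qed
  also have "... = (\<Sum>(i,j)\<in>{(i,j). i + j \<le> N}. gg x i j)"
    by (rule sum.triangle_reindex_eq[symmetric])
  finally show ?thesis .
qed

lemma tri_sub: "{(i,j). i + j \<le> N} \<subseteq> {..N} \<times> {..(N::nat)}"
  by auto

lemma err_eq:
  assumes N: "N \<ge> 1"
  shows "Sp N (Sp N x) - scaleR 2 (Sp N x) + C x = (\<Sum>(i,j)\<in>({..N} \<times> {..N}) - {(i,j). i + j \<le> N}. gg x i j)"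
proof -
  have "(\<Sum>(i,j)\<in>{..N} \<times> {..N}. gg x i j) = (\<Sum>(i,j)\<in>({..N} \<times> {..N}) - {(i,j). i + j \<le> N}. gg x i j) + (\<Sum>(i,j)\<in>{(i,j). i + j \<le> N}. gg x i j)"
    by (rule sum.subset_diff[OF tri_sub]) simp
  then show ?thesis unfolding SpSp two_Sp[OF N] by simp
qed

lemma err_norm:
  assumes N: "N \<ge> 1"
  shows "norm (Sp N (Sp N x) - scaleR 2 (Sp N x) + C x) \<le> (1 - ps N)^2 * norm x"
proof -
  let ?D = "({..N} \<times> {..N}) - {(i,j). i + j \<le> N}"
  have "norm (Sp N (Sp N x) - scaleR 2 (Sp N x) + C x) \<le> (\<Sum>p\<in>?D. norm ((\<lambda>(i,j). gg x i j) p))"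
    unfolding err_eq[OF N] by (rule norm_sum)
  also have "... \<le> (\<Sum>p\<in>?D. (\<lambda>(i,j). sc i * sc j) p * norm x)"
  proof (rule sum_mono)
    fix p :: "nat \<times> nat"
    obtain i j where p: "p = (i,j)" by (cases p)
    have "norm (gg x i j) \<le> sc i * sc j * norm x"
      unfolding gg_def using pw_norm[of "i+j" x] sc_nonneg[of i] sc_nonneg[of j]
      by (simp add: mult_left_mono)
    then show "norm ((\<lambda>(i,j). gg x i j) p) \<le> (\<lambda>(i,j). sc i * sc j) p * norm x" by (simp add: p)
  qed
  also have "... = (\<Sum>p\<in>?D. (\<lambda>(i,j). sc i * sc j) p) * norm x" by (simp add: sum_distrib_right)
  also have "(\<Sum>p\<in>?D. (\<lambda>(i,j). sc i * sc j) p) = (ps N)^2 - tri N"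
  proof -
    have "(\<Sum>(i,j)\<in>{..N} \<times> {..N}. sc i * sc j) = (\<Sum>(i,j)\<in>?D. sc i * sc j) + (\<Sum>(i,j)\<in>{(i,j). i + j \<le> N}. sc i * sc j)"
      by (rule sum.subset_diff[OF tri_sub]) simp
    then show ?thesis unfolding box_sq tri_def by simp
  qed
  also have "(ps N)^2 - tri N = (1 - ps N)^2"
    using ps_tri[OF N] by (simp add: power2_diff)
  finally show ?thesis .
qed

definition pN :: "nat \<Rightarrow> 'a \<Rightarrow> 'a" where "pN N y = y - Sp N y"

lemma pN_pN: "pN N (pN N x) - (x - C x) = Sp N (Sp N x) - scaleR 2 (Sp N x) + C x"
  unfolding pN_def clin_diff[OF Sp_clin] scaleR_2 by (simp add: algebra_simps)

lemma pN_norm: "norm (pN N y) \<le> 2 * norm y"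
  unfolding pN_def using norm_triangle_ineq4[of y "Sp N y"] Sp_norm1[of N y] by simp

lemma BqBq: "Bq (Bq x) = x - C x"
proof -
  define y where "y = Bq x"
  define E where "E = Bq y - (x - C x)"
  define f where "f N = (1 - ps N) * norm y + 2 * ((1 - ps N) * norm x) + (1 - ps N)^2 * norm x" for N
  have bound: "norm E \<le> f N" if N: "N \<ge> 1" for N
  proof -
    have Eeq: "E = (Bq y - pN N y) + (pN N y - pN N (pN N x)) + (pN N (pN N x) - (x - C x))"
      by (simp add: E_def)
    have "norm E \<le> norm (Bq y - pN N y) + norm (pN N y - pN N (pN N x)) + norm (pN N (pN N x) - (x - C x))"
      using norm_triangle_ineq[of "Bq y - pN N y + (pN N y - pN N (pN N x))" "pN N (pN N x) - (x - C x)"]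
        norm_triangle_ineq[of "Bq y - pN N y" "pN N y - pN N (pN N x)"] unfolding Eeq by linarith
    moreover have "norm (Bq y - pN N y) \<le> (1 - ps N) * norm y"
    proof -
      have "Bq y - pN N y = - (Si y - Sp N y)" by (simp add: Bq_def pN_def)
      then show ?thesis using tail[of y N] by (simp add: norm_minus_commute)
    qed
    moreover have "norm (pN N y - pN N (pN N x)) \<le> 2 * ((1 - ps N) * norm x)"
    proof -
      have "pN N y - pN N (pN N x) = pN N (y - pN N x)"
        by (simp add: pN_def clin_diff[OF Sp_clin] clin_add[OF Sp_clin] algebra_simps)
      moreover have "y - pN N x = - (Si x - Sp N x)" by (simp add: y_def Bq_def pN_def)
      ultimately have "norm (pN N y - pN N (pN N x)) \<le> 2 * norm (Si x - Sp N x)"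
        using pN_norm[of N "y - pN N x"] norm_minus_cancel[of "Si x - Sp N x"] by simp
      then show ?thesis using tail[of x N] by simp
    qed
    moreover have "norm (pN N (pN N x) - (x - C x)) \<le> (1 - ps N)^2 * norm x"
      unfolding pN_pN by (rule err_norm[OF N])
    ultimately show ?thesis unfolding f_def by linarith
  qed
  have "f \<longlonglongrightarrow> 0 * norm y + 2 * (0 * norm x) + 0^2 * norm x"
    unfolding f_def by (intro tendsto_intros ps_lim1)
  then have flim: "f \<longlonglongrightarrow> 0" by simp
  have "norm E \<le> 0"
    by (rule tendsto_le[OF trivial_limit_sequentially flim tendsto_const])
       (auto intro: bound simp: eventually_sequentially)
  then show ?thesis by (simp add: E_def y_def)
qed

lemma Bq_clin: "clinear_op Bq"
  by (rule clinear_opI) (simp_all add: Bq_def clin_add[OF Si_clin] clin_scaleC[OF Si_clin] scaleC_diff_right)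

lemma Bq_bounded: "bounded_op Bq"
proof -
  have "norm (Bq x) \<le> 2 * norm x" for x
    unfolding Bq_def using norm_triangle_ineq4[of x "Si x"] Si_norm[of x] by simp
  then show ?thesis unfolding bounded_op_def using Bq_clin by blast
qed

lemma Bq_pos: "positive_op Bq"
proof -
  have "Im (cinner (Bq x) x) = 0 \<and> 0 \<le> Re (cinner (Bq x) x)" for x
  proof -
    have s: "(\<lambda>n. cinner (trm x n) x) sums cinner (Si x) x"
      unfolding Si_def by (rule bounded_linear.sums[OF bl_cinner_left summable_sums[OF trm_summable]])
    have t: "cinner (trm x n) x = complex_of_real (sc n) * cinner ((C ^^ n) x) x" for n
      by (simp add: trm_def scaleR_scaleC cinner_scaleC_left)
    have sre: "(\<lambda>n. sc n * Re (cinner ((C ^^ n) x) x)) sums Re (cinner (Si x) x)"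
      using sums_Re[OF s] by (simp add: t)
    have sim: "(\<lambda>n. sc n * Im (cinner ((C ^^ n) x) x)) sums Im (cinner (Si x) x)"
      using sums_Im[OF s] by (simp add: t)
    then have "(\<lambda>n. 0) sums Im (cinner (Si x) x)" by (simp add: pw_im)
    then have im0: "Im (cinner (Si x) x) = 0" using sums_unique2 sums_zero by blast
    have sbd: "(\<lambda>n. sc n * (norm x)^2) sums (1 * (norm x)^2)"
      using sums_mult2[OF summable_sums[OF sc_summable], of "(norm x)^2"] suminf_sc by simp
    have "Re (cinner (Si x) x) \<le> 1 * (norm x)^2"
      by (rule sums_le[OF _ sre sbd]) (intro mult_left_mono pw_re sc_nonneg)
    then show ?thesis
      by (simp add: Bq_def cinner_diff_left im0 cinner_self_norm)
  qed
  then show ?thesis unfolding positive_op_def using Bq_bounded by blast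
qed

lemma Bq_comm:
  assumes Q: "bounded_op Q" and QC: "\<And>x. Q (C x) = C (Q x)"
  shows "Q (Bq x) = Bq (Q x)"
proof -
  have Ql: "clinear_op Q" using Q by (simp add: bounded_op_def)
  have pw: "Q ((C ^^ n) z) = (C ^^ n) (Q z)" for n z
    by (induction n) (simp_all add: QC)
  have "Q (Si x) = (\<Sum>n. Q (trm x n))"
    unfolding Si_def by (rule bounded_linear.suminf[OF bounded_op_bl[OF Q] trm_summable])
  also have "... = Si (Q x)" unfolding Si_def trm_def by (simp add: clin_scaleR[OF Ql] pw)
  finally show ?thesis by (simp add: Bq_def clin_diff[OF Ql])
qed

end

lemma sqrt_exists:
  fixes A :: "'a::chilbert_space \<Rightarrow> 'a"
  assumes A: "positive_op A"
  shows "\<exists>B. positive_op B \<and> B \<circ> B = A \<and> (\<forall>Q. bounded_op Q \<longrightarrow> Q \<circ> A = A \<circ> Q \<longrightarrow> Q \<circ> B = B \<circ> Q)"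
proof -
  obtain K where K0: "K > 0" and K: "\<And>x. norm (A x) \<le> K * norm x"
    using bounded_opD[OF pos_bounded[OF A]] by blast
  have Al: "clinear_op A" using pos_clin[OF A] .
  define k where "k = complex_of_real (1/K)"
  define C where "C x = x - scaleC k (A x)" for x
  have Clin: "clinear_op C"
    by (rule clinear_opI) (simp_all add: C_def clin_add[OF Al] clin_scaleC[OF Al] scaleC_add_right
        scaleC_diff_right scaleC_scaleC mult.commute)
  have Csa: "cinner (C x) y = cinner x (C y)" for x y
    by (simp add: C_def cinner_diff_left cinner_diff_right cinner_scaleC_left cinner_scaleC_right
        k_def pos_selfadj[OF A])
  have Cim: "Im (cinner (C x) x) = 0" for x
    using pos_im[OF A, of x] by (simp add: C_def cinner_diff_left cinner_scaleC_left k_def cinner_self_norm)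
  have Are: "Re (cinner (A x) x) \<le> K * (norm x)^2" for x
  proof -
    have "Re (cinner (A x) x) \<le> cmod (cinner (A x) x)" by (rule complex_Re_le_cmod)
    also have "... \<le> norm (A x) * norm x" by (rule CS)
    also have "... \<le> K * norm x * norm x" by (intro mult_right_mono K) simp
    finally show ?thesis by (simp add: power2_eq_square mult.assoc)
  qed
  have Cre: "0 \<le> Re (cinner (C x) x) \<and> Re (cinner (C x) x) \<le> (norm x)^2" for x
  proof -
    have e: "Re (cinner (C x) x) = (norm x)^2 - Re (cinner (A x) x) / K"
      by (simp add: C_def cinner_diff_left cinner_scaleC_left k_def cinner_self_norm)
    have "Re (cinner (A x) x) / K \<le> (norm x)^2" using Are[of x] K0 by (simp add: field_simps)
    moreover have "0 \<le> Re (cinner (A x) x) / K" using pos_re[OF A, of x] K0 by simp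
    ultimately show ?thesis unfolding e by simp
  qed
  have Cnorm: "norm (C x) \<le> norm x" for x
  proof -
    have "(cmod (cinner (C x) (C x)))^2 \<le> Re (cinner (C x) x) * Re (cinner (C (C x)) (C x))"
      by (rule gen_CS[OF Clin]) (use Cim Cre in auto)
    also have "... \<le> (norm x)^2 * (norm (C x))^2"
      using Cre[of x] Cre[of "C x"] by (intro mult_mono) auto
    moreover have "cmod (cinner (C x) (C x)) = (norm (C x))^2"
      by (simp add: cinner_self_norm del: of_real_power)
    ultimately have h: "(norm (C x))^2 * (norm (C x))^2 \<le> (norm x)^2 * (norm (C x))^2"
      by (simp add: power2_eq_square[of "(norm (C x))^2"])
    show ?thesis
    proof (cases "norm (C x) = 0")
      case True then show ?thesis by simp
    next
      case False
      then have "(norm (C x))^2 > 0" by simp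
      with h have "(norm (C x))^2 \<le> (norm x)^2"
        by (rule mult_right_le_imp_le)
      then show ?thesis by (rule power2_le_imp_le) simp
    qed
  qed
  interpret sq: sqctx C
    by unfold_locales (auto intro: Clin Cnorm Csa)
  define s where "s = complex_of_real (sqrt K)"
  define B where "B x = scaleC s (sq.Bq x)" for x
  have Bql: "clinear_op sq.Bq" by (rule sq.Bq_clin)
  have Bl: "clinear_op B"
    by (rule clinear_opI) (simp_all add: B_def clin_add[OF Bql] clin_scaleC[OF Bql] scaleC_add_right
        scaleC_scaleC mult.commute)
  have Bpos: "positive_op B"
  proof -
    obtain L where L: "\<forall>x. norm (sq.Bq x) \<le> L * norm x" using sq.Bq_bounded by (auto simp: bounded_op_def)
    have "norm (B x) \<le> (sqrt K * L) * norm x" for x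
      using L K0 by (simp add: B_def s_def norm_scaleC mult.assoc mult_left_mono)
    then have bB: "bounded_op B" unfolding bounded_op_def using Bl by blast
    have "Im (cinner (B x) x) = 0 \<and> 0 \<le> Re (cinner (B x) x)" for x
      using pos_im[OF sq.Bq_pos, of x] pos_re[OF sq.Bq_pos, of x] K0
      by (simp add: B_def s_def cinner_scaleC_left)
    then show ?thesis unfolding positive_op_def using bB by blast
  qed
  have BB: "B \<circ> B = A"
  proof
    fix x
    have "(B \<circ> B) x = scaleC (s * s) (sq.Bq (sq.Bq x))"
      by (simp add: B_def clin_scaleC[OF Bql] scaleC_scaleC)
    also have "... = scaleC (s * s) (scaleC k (A x))" by (simp add: sq.BqBq C_def)
    also have "... = A x" using K0 by (simp add: scaleC_scaleC s_def k_def scaleC_one flip: of_real_mult)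
    finally show "(B \<circ> B) x = A x" .
  qed
  have comm: "Q \<circ> B = B \<circ> Q" if Q: "bounded_op Q" and QA: "Q \<circ> A = A \<circ> Q" for Q
  proof
    fix x
    have Ql: "clinear_op Q" using Q by (simp add: bounded_op_def)
    have QC: "Q (C z) = C (Q z)" for z
      using fun_cong[OF QA, of z] by (simp add: C_def clin_diff[OF Ql] clin_scaleC[OF Ql])
    show "(Q \<circ> B) x = (B \<circ> Q) x"
      by (simp add: B_def clin_scaleC[OF Ql] sq.Bq_comm[OF Q QC])
  qed
  show ?thesis using Bpos BB comm by blast
qed

lemma sqrt_unique:
  assumes B: "positive_op B" and D: "positive_op D" and eq: "B \<circ> B = D \<circ> D" and c: "D \<circ> B = B \<circ> D"
  shows "B = D"
proof
  fix x
  define y where "y = B x - D x"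
  have Bl: "clinear_op B" using pos_clin[OF B] .
  have Dl: "clinear_op D" using pos_clin[OF D] .
  have "B y + D y = (B (B x) - D (D x)) + (D (B x) - B (D x))"
    by (simp add: y_def clin_diff[OF Bl] clin_diff[OF Dl])
  also have "... = 0" using fun_cong[OF eq, of x] fun_cong[OF c, of x] by simp
  finally have "B y + D y = 0" .
  then have "cinner (B y) y + cinner (D y) y = 0" by (metis cinner_add_left cinner_zero_left)
  then have "Re (cinner (B y) y) + Re (cinner (D y) y) = 0" by (metis plus_complex.sel(1) zero_complex.sel(1))
  then have "Re (cinner (B y) y) = 0" "Re (cinner (D y) y) = 0"
    using pos_re[OF B, of y] pos_re[OF D, of y] by linarith+
  then have By: "B y = 0" and Dy: "D y = 0" using pos_zero B D by blast+
  have "cinner y y = cinner x (B y) - cinner x (D y)"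
    by (simp add: y_def cinner_diff_left pos_selfadj[OF B] pos_selfadj[OF D])
  also have "... = 0" by (simp add: By Dy)
  finally have "y = 0" using cinner_eq_zero_iff[of y] by simp
  then show "B x = D x" by (simp add: y_def)
qed

lemma op_sqrt_prop:
  fixes A :: "'a::chilbert_space \<Rightarrow> 'a"
  assumes A: "positive_op A"
  shows "positive_op (op_sqrt A) \<and> op_sqrt A \<circ> op_sqrt A = A"
proof -
  obtain B where B: "positive_op B" "B \<circ> B = A"
    and comm: "\<And>Q. bounded_op Q \<Longrightarrow> Q \<circ> A = A \<circ> Q \<Longrightarrow> Q \<circ> B = B \<circ> Q"
    using sqrt_exists[OF A] by blast
  have "op_sqrt A = B"
    unfolding op_sqrt_def
  proof (rule the_equality)
    show "positive_op B \<and> B \<circ> B = A" using B by simp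
  next
    fix D assume D: "positive_op D \<and> D \<circ> D = A"
    have "D \<circ> A = A \<circ> D" using D by (auto simp: comp_assoc)
    then have "D \<circ> B = B \<circ> D" using comm pos_bounded D by blast
    then show "D = B" using sqrt_unique[of B D] B D by metis
  qed
  then show ?thesis using B by simp
qed

lemma csub_range: "clinear_op A \<Longrightarrow> csubspace (range A)"
  unfolding csubspace_def
  by (auto simp: image_iff) (metis clin_zero, metis clin_add, metis clin_scaleC)

lemma csub_closure:
  fixes S :: "'a::chilbert_space set"
  assumes S: "csubspace S"
  shows "csubspace (closure S)"
  unfolding csubspace_def
proof (intro conjI ballI allI)
  show "0 \<in> closure S" using csub_zero[OF S] closure_subset by blast
next
  fix x y assume x: "x \<in> closure S" and y: "y \<in> closure S"
  obtain f where f: "\<And>n. f n \<in> S" "f \<longlonglongrightarrow> x" using x unfolding closure_sequential by blast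
  obtain g where g: "\<And>n. g n \<in> S" "g \<longlonglongrightarrow> y" using y unfolding closure_sequential by blast
  have "(\<lambda>n. f n + g n) \<longlonglongrightarrow> x + y" by (intro tendsto_add f g)
  moreover have "\<And>n. f n + g n \<in> S" using S f g by (simp add: csub_add)
  ultimately show "x + y \<in> closure S" unfolding closure_sequential by (intro exI[of _ "\<lambda>n. f n + g n"]) simp
next
  fix c x assume x: "x \<in> closure S"
  obtain f where f: "\<And>n. f n \<in> S" "f \<longlonglongrightarrow> x" using x unfolding closure_sequential by blast
  have "(\<lambda>n. scaleC c (f n)) \<longlonglongrightarrow> scaleC c x" by (rule bounded_linear.tendsto[OF bl_scaleC f(2)])
  moreover have "\<And>n. scaleC c (f n) \<in> S" using S f by (simp add: csub_scaleC)
  ultimately show "scaleC c x \<in> closure S" unfolding closure_sequential by (intro exI[of _ "\<lambda>n. scaleC c (f n)"]) simp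
qed

lemma closure_map:
  fixes L :: "'a::chilbert_space \<Rightarrow> 'a"
  assumes L: "bounded_op L" and sub: "\<And>x. x \<in> S \<Longrightarrow> L x \<in> S'" and x: "x \<in> closure S"
  shows "L x \<in> closure S'"
proof -
  obtain f where f: "\<And>n. f n \<in> S" "f \<longlonglongrightarrow> x" using x unfolding closure_sequential by blast
  have "(\<lambda>n. L (f n)) \<longlonglongrightarrow> L x" by (rule bounded_linear.tendsto[OF bounded_op_bl[OF L] f(2)])
  moreover have "\<And>n. L (f n) \<in> S'" using sub f by simp
  ultimately show ?thesis unfolding closure_sequential by (intro exI[of _ "\<lambda>n. L (f n)"]) simp
qed

lemma perp_closure:
  fixes w :: "'a::chilbert_space"
  assumes h: "\<And>m. m \<in> S \<Longrightarrow> cinner w m = 0" and m: "m \<in> closure S"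
  shows "cinner w m = 0"
proof -
  obtain f where f: "\<And>n. f n \<in> S" "f \<longlonglongrightarrow> m" using m unfolding closure_sequential by blast
  have "(\<lambda>n. cinner w (f n)) \<longlonglongrightarrow> cinner w m" by (rule bounded_linear.tendsto[OF bl_cinner_right f(2)])
  moreover have "(\<lambda>n. cinner w (f n)) = (\<lambda>n. 0)" using h f by simp
  ultimately show ?thesis using LIMSEQ_unique tendsto_const by metis
qed

theorem mainTheorem7:
  fixes A T :: "'a::chilbert_space \<Rightarrow> 'a" and l :: complex
  assumes "positive_op A" and "A \<noteq> (\<lambda>_. 0)"
    and "T \<in> B_sqrtA A"
    and "T \<circ> op_sqrt A = op_sqrt A \<circ> T"
    and "cmod l > opnormA A T"
  shows "l \<in> resolventA A T"
proof -
  note Apos = assms(1)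
  define B where "B = op_sqrt A"
  have Bpos: "positive_op B" and BB: "B \<circ> B = A" unfolding B_def using op_sqrt_prop[OF Apos] by simp_all
  have ABB: "A x = B (B x)" for x using fun_cong[OF BB, of x] unfolding o_apply by (rule sym)
  have Bl: "clinear_op B" using pos_clin[OF Bpos] .
  have bB: "bounded_op B" using pos_bounded[OF Bpos] .
  have Al: "clinear_op A" using pos_clin[OF Apos] .
  have bA: "bounded_op A" using pos_bounded[OF Apos] .
  have "T \<in> {S. bounded_op S \<and> range (adjoint_op S \<circ> op_sqrt A) \<subseteq> range (op_sqrt A)}"
    using assms(3) unfolding B_sqrtA_def .
  then have bT: "bounded_op T" and Tadj: "range (adjoint_op T \<circ> B) \<subseteq> range B"
    unfolding mem_Collect_eq B_def by auto
  have Tl: "clinear_op T" using bT by (simp add: bounded_op_def)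
  obtain KT where KT: "\<And>x. norm (T x) \<le> KT * norm x" using bT by (auto simp: bounded_op_def)
  have TB: "T (B x) = B (T x)" for x using fun_cong[OF assms(4), of x] unfolding o_apply B_def .
  have TA: "T (A x) = A (T x)" for x by (simp add: ABB TB)
  have BA: "B (A x) = A (B x)" for x by (simp add: ABB)
  have Asa: "cinner (A x) y = cinner x (A y)" for x y by (rule pos_selfadj[OF Apos])
  have Bsa: "cinner (B x) y = cinner x (B y)" for x y by (rule pos_selfadj[OF Bpos])
  have normA_eq: "normA A y = norm (B y)" for y
  proof -
    have "Re (cinner (A y) y) = (norm (B y))^2"
      by (simp add: ABB Bsa[of "B y"] norm_sq_cinner)
    then show ?thesis by (simp add: normA_def)
  qed
  have Bzero: "B w = 0" if "A w = 0" for w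
  proof -
    have "(norm (B w))^2 = 0" using normA_eq[of w] that by (simp add: normA_def)
    then show ?thesis by simp
  qed

  define M where "M = closure (range A)"
  have clM: "closed M" by (simp add: M_def)
  have subM: "csubspace M" unfolding M_def by (rule csub_closure[OF csub_range[OF Al]])
  have AinM: "A x \<in> M" for x unfolding M_def by (rule closure_subset[THEN subsetD]) simp
  have perp1: "cinner w m = 0" if "A w = 0" "m \<in> M" for w m
  proof (rule perp_closure[of "range A"])
    show "m \<in> closure (range A)" using that(2) by (simp add: M_def)
    fix m' assume "m' \<in> range A"
    then obtain z where "m' = A z" by blast
    then show "cinner w m' = 0" by (simp add: Asa[symmetric] that(1))
  qed
  have perp2: "A w = 0" if "\<And>m. m \<in> M \<Longrightarrow> cinner w m = 0" for w
  proof -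
    note aa = pos_selfadj[OF Apos, of w "A w"]
    have "cinner (A w) (A w) = cinner w (A (A w))" by (fact aa)
    also have "... = 0" by (rule that[OF AinM[of "A w"]])
    finally have "cinner (A w) (A w) = 0" .
    then show ?thesis by (simp only: cinner_eq_zero_iff)
  qed
  have mapM: "L x \<in> M" if L: "bounded_op L" and LA: "\<And>z. L (A z) = A (L z)" and x: "x \<in> M" for L x
  proof -
    have "L x \<in> closure (range A)"
      by (rule closure_map[OF L _ x[unfolded M_def]]) (auto simp: LA)
    then show ?thesis by (simp add: M_def)
  qed
  have TM: "T x \<in> M" if "x \<in> M" for x using mapM[OF bT TA that] .
  have BM: "B x \<in> M" if "x \<in> M" for x using mapM[OF bB BA that] .

  define P where "P = proj M"
  have Pin: "P x \<in> M" for x using proj_prop[OF clM subM] by (simp add: P_def)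
  have Porth: "m \<in> M \<Longrightarrow> cinner (x - P x) m = 0" for x m using proj_prop[OF clM subM] by (simp add: P_def)
  have Pl: "clinear_op P" unfolding P_def by (rule proj_clinear[OF clM subM])
  have bP: "bounded_op P" unfolding P_def by (rule proj_bounded[OF clM subM])
  have Pnorm: "norm (P x) \<le> norm x" for x unfolding P_def by (rule proj_norm[OF clM subM])
  have Pid: "x \<in> M \<Longrightarrow> P x = x" for x unfolding P_def by (rule proj_id[OF clM subM])
  have AP0: "A (x - P x) = 0" for x by (rule perp2) (rule Porth)
  have AP: "A (P x) = A x" for x using AP0[of x] by (simp add: clin_diff[OF Al])
  have BP: "B (P x) = B x" for x using Bzero[OF AP0[of x]] by (simp add: clin_diff[OF Bl])
  have TP: "T (P x) = P (T x)" for x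
  proof -
    have "P (T x) = T (P x)"
    proof (rule proj_unique[OF clM subM, folded P_def])
      show "T (P x) \<in> M" by (rule TM[OF Pin])
      fix m assume m: "m \<in> M"
      have "A (T (x - P x)) = 0" by (simp add: TA[symmetric] AP0 clin_zero[OF Tl])
      then have "cinner (T (x - P x)) m = 0" by (rule perp1[OF _ m])
      then show "cinner (T x - T (P x)) m = 0" by (simp add: clin_diff[OF Tl])
    qed
    then show ?thesis by simp
  qed
  have PB: "P (B x) = B (P x)" for x
  proof -
    have "P (B x) = B (P x)"
    proof (rule proj_unique[OF clM subM, folded P_def])
      show "B (P x) \<in> M" by (rule BM[OF Pin])
      fix m assume m: "m \<in> M"
      show "cinner (B x - B (P x)) m = 0" by (simp add: BP)
    qed
    then show ?thesis .
  qed

  define S where "S = {normA A (T x) | x. x \<in> M \<and> normA A x = 1}"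
  define N where "N = opnormA A T"
  have NS: "N = Sup S" by (simp add: N_def S_def opnormA_def M_def)
  have bdd: "bdd_above S"
  proof (rule bdd_aboveI[where M=KT])
    fix s assume "s \<in> S"
    then obtain x where x: "s = normA A (T x)" "normA A x = 1" by (auto simp: S_def)
    have "s = norm (T (B x))" using x by (simp add: normA_eq TB)
    also have "... \<le> KT * norm (B x)" by (rule KT)
    also have "... = KT" using x normA_eq by simp
    finally show "s \<le> KT" .
  qed
  have BMnz: "x = 0" if "x \<in> M" "B x = 0" for x
  proof -
    have "A x = 0" unfolding ABB that(2) by (rule clin_zero[OF Bl])
    then have "cinner x x = 0" by (rule perp1[OF _ that(1)])
    then show ?thesis by (simp only: cinner_eq_zero_iff)
  qed
  obtain x0 where x0: "A x0 \<noteq> 0" using assms(2) by (auto simp: fun_eq_iff)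
  have Bx0: "B (A x0) \<noteq> 0" using BMnz[OF AinM[of x0]] x0 by auto
  have N0: "N \<ge> 0"
  proof -
    define r where "r = norm (B (A x0))"
    have r0: "r > 0" using Bx0 by (simp add: r_def)
    define x1 where "x1 = scaleC (complex_of_real (1/r)) (A x0)"
    have x1M: "x1 \<in> M" unfolding x1_def by (rule csub_scaleC[OF subM AinM])
    have "normA A x1 = 1" using r0 by (simp add: normA_eq x1_def clin_scaleC[OF Bl] norm_scaleC norm_divide r_def)
    then have "normA A (T x1) \<in> S" using x1M by (auto simp: S_def)
    then have "normA A (T x1) \<le> N" unfolding NS by (rule cSup_upper[OF _ bdd])
    moreover have "normA A (T x1) \<ge> 0" by (simp add: normA_eq)
    ultimately show ?thesis by linarith
  qed
  have claim1: "norm (B (T x)) \<le> N * norm (B x)" if xM: "x \<in> M" for x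
  proof (cases "B x = 0")
    case True
    then have "x = 0" by (rule BMnz[OF xM])
    then show ?thesis by (simp add: clin_zero[OF Tl] clin_zero[OF Bl])
  next
    case False
    define r where "r = norm (B x)"
    have r0: "r > 0" using False by (simp add: r_def)
    define x1 where "x1 = scaleC (complex_of_real (1/r)) x"
    have x1M: "x1 \<in> M" unfolding x1_def by (rule csub_scaleC[OF subM xM])
    have "normA A x1 = 1" using r0 by (simp add: normA_eq x1_def clin_scaleC[OF Bl] norm_scaleC norm_divide r_def)
    then have "normA A (T x1) \<in> S" using x1M by (auto simp: S_def)
    then have "normA A (T x1) \<le> N" unfolding NS by (rule cSup_upper[OF _ bdd])
    moreover have "normA A (T x1) = norm (B (T x)) / r"
      using r0 by (simp add: normA_eq x1_def clin_scaleC[OF Bl] clin_scaleC[OF Tl] norm_scaleC norm_divide)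
    ultimately have "norm (B (T x)) / r \<le> N" by simp
    then have "norm (B (T x)) \<le> N * r" using r0 by (simp add: pos_divide_le_eq)
    then show ?thesis unfolding r_def .
  qed
  have claim2: "norm (T (B z)) \<le> N * norm (B z)" for z
  proof -
    have "T (B z) = T (B (P z))" by (simp only: BP)
    also have "... = B (T (P z))" by (fact TB)
    finally have "T (B z) = B (T (P z))" .
    then have "norm (T (B z)) = norm (B (T (P z)))" by simp
    also have "... \<le> N * norm (B (P z))" by (rule claim1[OF Pin])
    finally show ?thesis by (simp add: BP)
  qed
  have claim3: "norm (T y) \<le> N * norm y" if yM: "y \<in> M" for y
  proof -
    have "closure (range B) \<subseteq> {y. norm (T y) \<le> N * norm y}"
    proof (rule closure_minimal)
      show "range B \<subseteq> {y. norm (T y) \<le> N * norm y}" using claim2 by auto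
      show "closed {y. norm (T y) \<le> N * norm y}"
        by (intro closed_Collect_le continuous_intros linear_continuous_on bounded_op_bl[OF bT])
    qed
    moreover have "M \<subseteq> closure (range B)" unfolding M_def
      by (rule closure_mono) (auto simp: ABB)
    ultimately show ?thesis using yM by auto
  qed
  have TnM: "(T ^^ n) y \<in> M" if "y \<in> M" for n y
    using that by (induction n) (auto intro: TM)
  have Tnorm: "norm ((T ^^ n) y) \<le> N ^ n * norm y" if "y \<in> M" for n y
  proof (induction n)
    case 0 then show ?case by simp
  next
    case (Suc n)
    have "norm ((T ^^ Suc n) y) = norm (T ((T ^^ n) y))" by simp
    also have "... \<le> N * norm ((T ^^ n) y)" by (rule claim3[OF TnM[OF that]])
    also have "... \<le> N * (N ^ n * norm y)" by (rule mult_left_mono[OF Suc N0])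
    finally show ?case by (simp add: mult.assoc)
  qed
  have Tnl: "clinear_op (T ^^ n)" for n
    by (induction n) (auto simp: clinear_op_def clin_add[OF Tl] clin_scaleC[OF Tl])
  have ln0: "l \<noteq> 0" using assms(5) N0 by (auto simp: N_def)
  have lpos: "cmod l > 0" using ln0 by simp
  define q where "q = N / cmod l"
  have q0: "q \<ge> 0" using N0 lpos by (simp add: q_def)
  have q1: "q < 1" using assms(5) lpos by (simp add: q_def N_def)
  have qn: "norm q < 1" using q0 q1 by simp
  define il where "il = inverse l"
  have lil: "l * il = 1" using ln0 by (simp add: il_def)
  define v where "v x n = scaleC (il ^ n) ((T ^^ n) (P x))" for x n
  define u where "u x n = scaleC (il ^ Suc n) ((T ^^ n) (P x))" for x n
  have unorm: "norm (u x n) \<le> (inverse (cmod l) * norm x) * q ^ n" for x n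
  proof -
    have "norm (u x n) = inverse (cmod l) ^ Suc n * norm ((T ^^ n) (P x))"
      by (simp add: u_def norm_scaleC il_def norm_mult norm_power norm_inverse)
    also have "... \<le> inverse (cmod l) ^ Suc n * (N ^ n * norm x)"
    proof (rule mult_left_mono)
      have "norm ((T ^^ n) (P x)) \<le> N ^ n * norm (P x)" by (rule Tnorm[OF Pin])
      also have "... \<le> N ^ n * norm x" by (rule mult_left_mono[OF Pnorm]) (simp add: N0)
      finally show "norm ((T ^^ n) (P x)) \<le> N ^ n * norm x" .
    qed simp
    also have "... = (inverse (cmod l) * norm x) * q ^ n"
      by (simp add: q_def power_divide field_simps)
    finally show ?thesis .
  qed
  have gsum: "summable (\<lambda>n. (inverse (cmod l) * norm x) * q ^ n)" for x
    by (rule summable_mult[OF summable_geometric[OF qn]])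
  have usum: "summable (u x)" for x
    by (rule summable_comparison_test'[OF gsum[of x]]) (rule unorm)
  have unsum: "summable (\<lambda>n. norm (u x n))" for x
    by (rule summable_comparison_test'[OF gsum[of x]]) (simp add: unorm)
  have vnorm: "norm (v x n) \<le> norm x * q ^ n" for x n
  proof -
    have "norm (v x n) = inverse (cmod l) ^ n * norm ((T ^^ n) (P x))"
      by (simp add: v_def norm_scaleC il_def norm_mult norm_power norm_inverse)
    also have "... \<le> inverse (cmod l) ^ n * (N ^ n * norm x)"
    proof (rule mult_left_mono)
      have "norm ((T ^^ n) (P x)) \<le> N ^ n * norm (P x)" by (rule Tnorm[OF Pin])
      also have "... \<le> N ^ n * norm x" by (rule mult_left_mono[OF Pnorm]) (simp add: N0)
      finally show "norm ((T ^^ n) (P x)) \<le> N ^ n * norm x" .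
    qed simp
    also have "... = norm x * q ^ n"
      by (simp add: q_def power_divide field_simps)
    finally show ?thesis .
  qed
  have vlim: "v x \<longlonglongrightarrow> 0" for x
  proof (rule Lim_null_comparison)
    show "\<forall>\<^sub>F n in sequentially. norm (v x n) \<le> norm x * q ^ n" by (simp add: vnorm)
    show "(\<lambda>n. norm x * q ^ n) \<longlonglongrightarrow> 0"
      using tendsto_mult[OF tendsto_const LIMSEQ_power_zero[OF qn], of "norm x"] by simp
  qed
  have v0: "v x 0 = P x" for x by (simp add: v_def scaleC_one)
  have tel: "(\<lambda>n. v x n - v x (Suc n)) sums P x" for x
    using telescope_sums'[OF vlim[of x]] by (simp add: v0)
  have Tsc: "T (scaleC c w) = scaleC c (T w)" for c w by (rule clin_scaleC[OF Tl])
  have key1: "scaleC l (u x n) - T (u x n) = v x n - v x (Suc n)" for x n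
  proof -
    have "scaleC l (u x n) = scaleC (l * il ^ Suc n) ((T ^^ n) (P x))"
      by (simp add: u_def scaleC_scaleC)
    also have "l * il ^ Suc n = il ^ n" using lil by (simp add: mult.assoc[symmetric])
    finally have a: "scaleC l (u x n) = v x n" by (simp add: v_def)
    have b: "T (u x n) = v x (Suc n)" by (simp add: u_def v_def Tsc)
    show ?thesis by (simp add: a b)
  qed
  have key2: "u (scaleC l x - T x) n = v x n - v x (Suc n)" for x n
  proof -
    have "P (scaleC l x - T x) = scaleC l (P x) - T (P x)"
      by (simp add: clin_diff[OF Pl] clin_scaleC[OF Pl] TP)
    then have "(T ^^ n) (P (scaleC l x - T x)) = scaleC l ((T ^^ n) (P x)) - (T ^^ Suc n) (P x)"
      by (simp add: clin_diff[OF Tnl] clin_scaleC[OF Tnl] funpow_swap1)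
    then have "u (scaleC l x - T x) n = scaleC (il ^ Suc n * l) ((T ^^ n) (P x)) - scaleC (il ^ Suc n) ((T ^^ Suc n) (P x))"
      by (simp add: u_def scaleC_diff_right scaleC_scaleC del: funpow.simps)
    also have "il ^ Suc n * l = il ^ n" using lil by (simp add: mult.commute mult.left_commute)
    finally show ?thesis by (simp add: v_def del: funpow.simps)
  qed
  define R where "R x = suminf (u x)" for x
  have R1: "scaleC l (R x) - T (R x) = P x" for x
  proof -
    have s1: "(\<lambda>n. scaleC l (u x n)) sums scaleC l (R x)"
      unfolding R_def by (rule bounded_linear.sums[OF bl_scaleC summable_sums[OF usum]])
    have s2: "(\<lambda>n. T (u x n)) sums T (R x)"
      unfolding R_def by (rule bounded_linear.sums[OF bounded_op_bl[OF bT] summable_sums[OF usum]])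
    have "(\<lambda>n. scaleC l (u x n) - T (u x n)) sums (scaleC l (R x) - T (R x))"
      by (rule sums_diff[OF s1 s2])
    then have "(\<lambda>n. v x n - v x (Suc n)) sums (scaleC l (R x) - T (R x))" by (simp add: key1)
    then show ?thesis using tel[of x] by (rule sums_unique2)
  qed
  have R2: "R (scaleC l x - T x) = P x" for x
  proof -
    have "(\<lambda>n. u (scaleC l x - T x) n) sums P x" by (simp add: key2 tel)
    then show ?thesis unfolding R_def by (simp add: sums_iff)
  qed
  have uadd: "u (x + y) n = u x n + u y n" for x y n
    by (simp add: u_def clin_add[OF Pl] clin_add[OF Tnl] scaleC_add_right)
  have usc: "u (scaleC c x) n = scaleC c (u x n)" for c x n
    by (simp add: u_def clin_scaleC[OF Pl] clin_scaleC[OF Tnl] scaleC_scaleC mult.commute)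
  have Rl: "clinear_op R"
  proof (rule clinear_opI)
    fix x y show "R (x + y) = R x + R y"
      unfolding R_def uadd by (rule suminf_add[OF usum usum, symmetric])
  next
    fix c x show "R (scaleC c x) = scaleC c (R x)"
      unfolding R_def usc by (rule bounded_linear.suminf[OF bl_scaleC usum, symmetric])
  qed
  have bR: "bounded_op R"
  proof -
    have "norm (R x) \<le> (inverse (cmod l) * (1 / (1 - q))) * norm x" for x
    proof -
      have "norm (R x) \<le> (\<Sum>n. norm (u x n))" unfolding R_def by (rule summable_norm[OF unsum])
      also have "... \<le> (\<Sum>n. (inverse (cmod l) * norm x) * q ^ n)"
        by (rule suminf_le[OF unorm unsum gsum[of x]])
      also have "... = (inverse (cmod l) * norm x) * (1 / (1 - q))"
        using suminf_mult[OF summable_geometric[OF qn]] suminf_geometric[OF qn] by simp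
      finally show ?thesis by (simp add: ac_simps)
    qed
    then show ?thesis unfolding bounded_op_def using Rl by blast
  qed
  have TnB: "(T ^^ n) (B y) = B ((T ^^ n) y)" for n y
    by (induction n) (simp_all add: TB)
  have RB: "R (B x) = B (R x)" for x
  proof -
    have "u (B x) n = B (u x n)" for n
      by (simp add: u_def PB TnB clin_scaleC[OF Bl] del: funpow.simps)
    then have "u (B x) = (\<lambda>n. B (u x n))" by (rule ext)
    then have "R (B x) = (\<Sum>n. B (u x n))" unfolding R_def by simp
    also have "... = B (R x)"
      unfolding R_def by (rule bounded_linear.suminf[OF bounded_op_bl[OF bB] usum, symmetric])
    finally show ?thesis .
  qed
  have R_ne: "R \<noteq> (\<lambda>_. 0)"
  proof
    assume R0: "R = (\<lambda>_. 0)"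
    have "scaleC l (R (A x0)) - T (R (A x0)) = P (A x0)" by (rule R1)
    also have "P (A x0) = A x0" by (rule Pid[OF AinM])
    finally have "A x0 = scaleC l 0 - T 0" using R0 by simp
    then show False using x0 by (simp add: clin_zero[OF Tl])
  qed
  have RBs: "R \<in> B_sqrtA A"
  proof -
    define Rs where "Rs = adjoint_op R"
    have Rs: "cinner (R x) y = cinner x (Rs y)" for x y unfolding Rs_def by (rule adjoint_prop[OF bR])
    have RsB: "Rs (B y) = B (Rs y)" for y
    proof (rule ext_cinner)
      fix z
      have "cinner z (Rs (B y)) = cinner (R z) (B y)" by (simp add: Rs)
      also have "... = cinner (B (R z)) y" by (simp add: Bsa)
      also have "... = cinner (R (B z)) y" by (simp add: RB)
      also have "... = cinner (B z) (Rs y)" by (simp add: Rs)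
      also have "... = cinner z (B (Rs y))" by (simp add: Bsa)
      finally show "cinner z (Rs (B y)) = cinner z (B (Rs y))" .
    qed
    have "range (adjoint_op R \<circ> B) \<subseteq> range B"
    proof
      fix w assume "w \<in> range (adjoint_op R \<circ> B)"
      then obtain y where "w = Rs (B y)" by (auto simp: Rs_def)
      then show "w \<in> range B" by (simp add: RsB)
    qed
    then show ?thesis using bR by (simp add: B_sqrtA_def B_def)
  qed
  define Sl where "Sl x = scaleC l x - T x" for x
  have Sll: "clinear_op Sl"
    by (rule clinear_opI) (simp_all add: Sl_def clin_add[OF Tl] clin_scaleC[OF Tl] scaleC_add_right
        scaleC_diff_right scaleC_scaleC mult.commute)
  have bSl: "bounded_op Sl"
  proof -
    have "norm (Sl x) \<le> (cmod l + KT) * norm x" for x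
    proof -
      have "norm (Sl x) \<le> norm (scaleC l x) + norm (T x)" unfolding Sl_def by (rule norm_triangle_ineq4)
      also have "... \<le> cmod l * norm x + KT * norm x" using KT[of x] by (simp add: norm_scaleC)
      finally show ?thesis by (simp add: distrib_right)
    qed
    then show ?thesis unfolding bounded_op_def using Sll by blast
  qed
  have SBs: "Sl \<in> B_sqrtA A"
  proof -
    define Ts where "Ts = adjoint_op T"
    have Ts: "cinner (T x) y = cinner x (Ts y)" for x y unfolding Ts_def by (rule adjoint_prop[OF bT])
    have adj: "adjoint_op Sl = (\<lambda>y. scaleC (cnj l) y - Ts y)"
    proof (rule adjoint_eq[OF bSl])
      fix x y
      show "cinner (Sl x) y = cinner x (scaleC (cnj l) y - Ts y)"
        by (simp add: Sl_def cinner_diff_left cinner_diff_right cinner_scaleC_left cinner_scaleC_right Ts)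
    qed
    have "range (adjoint_op Sl \<circ> B) \<subseteq> range B"
    proof
      fix w assume "w \<in> range (adjoint_op Sl \<circ> B)"
      then obtain y where w: "w = scaleC (cnj l) (B y) - Ts (B y)" by (auto simp: adj)
      have "Ts (B y) \<in> range B" using Tadj by (auto simp: Ts_def)
      then obtain z where z: "Ts (B y) = B z" by auto
      have "w = B (scaleC (cnj l) y - z)" by (simp add: w z clin_diff[OF Bl] clin_scaleC[OF Bl])
      then show "w \<in> range B" by simp
    qed
    then show ?thesis using bSl by (simp add: B_sqrtA_def B_def)
  qed
  have c1: "A \<circ> Sl \<circ> R = A"
  proof
    fix x
    have "(A \<circ> Sl \<circ> R) x = A (P x)" by (simp add: Sl_def R1)
    then show "(A \<circ> Sl \<circ> R) x = A x" by (simp add: AP)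
  qed
  have c2: "A \<circ> R \<circ> Sl = A"
  proof
    fix x
    have "(A \<circ> R \<circ> Sl) x = A (P x)" by (simp add: Sl_def R2)
    then show "(A \<circ> R \<circ> Sl) x = A x" by (simp add: AP)
  qed
  have "A_invertible A Sl"
    unfolding A_invertible_def using SBs RBs R_ne c1 c2 by blast
  then show ?thesis unfolding resolventA_def Sl_def[abs_def] by simp
qed

end
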